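(* Assume Assumption A, that $N<\infty$, and that $\sum_{n\in\mathbb{N}}d(e^n)^{N-2}=\infty$. Let $(\sigma_i)_{i\in\mathbb{N}}$ be i.i.d. copies of $\sigma_0$, $m_i:=\max_{j\le i}\sigma_j$, $S_i:=\sum_{j\le i}\sigma_j$. Then for each sufficiently small $\varepsilon>0$, almost-surely \[ \frac{S_i}{m_i}>N-1-\varepsilon \] for infinitely many $i$.
   Context: $\sigma_0$ is a strictly positive random variable under $\mathbf{P}$ and $L(u):=1/\mathbf{P}(\sigma_0>u)$ satisfies $\lim_{u\to\infty}L(uv)/L(u)=1$ for all $v>0$. Assumption A: $L$ is continuous, and there exist functions $g,k$ with $g(u)\to0$ as $u\to\infty$, $g$ eventually monotone decreasing, such that $\lim_{u\to\infty}\big(L(uv)/L(u)-1\big)/g(u)=k(v)$ for every $v>0$, where there exists $v$ with $k(v)\neq0$ and $k(uv)\ne k(u)$ for all $u>0$. $d(u):=g(L^{-1}(u))$ with $L^{-1}$ the right-continuous inverse of $L$, and \[N:=\min\Big\{\ell\in\{2,3,\dots\}: \sum_{n\in\mathbb{N}}\big(d(e^n)\log n\big)^{\ell-1}<\infty\Big\},\] with $N=\infty$ if no such $\ell$ exists. *)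

theory Defs
  imports "HOL-Probability.Probability"
begin

definition tailL :: "'a measure \<Rightarrow> ('a \<Rightarrow> real) \<Rightarrow> real \<Rightarrow> real" where
  "tailL M X u = 1 / measure M {x \<in> space M. u < X x}"

definition rc_inv :: "(real \<Rightarrow> real) \<Rightarrow> real \<Rightarrow> real" where
  "rc_inv L y = Inf {x. y < L x}"

definition Nidx :: "(real \<Rightarrow> real) \<Rightarrow> nat" where
  "Nidx d = (LEAST l. 2 \<le> l \<and> summable (\<lambda>n::nat. (d (exp (real n)) * ln (real n)) ^ (l - 1)))"

end

theory Submission
  imports Defs
begin

locale bsetup =
  fixes M :: "'a measure" and \<sigma> :: "nat \<Rightarrow> 'a \<Rightarrow> real" and g k :: "real \<Rightarrow> real"
  assumes P: "prob_space M"
    and rv: "\<And>i. \<sigma> i \<in> borel_measurable M"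
    and indep: "prob_space.indep_vars M (\<lambda>_. borel) \<sigma> UNIV"
    and ident: "\<And>i. distr M borel (\<sigma> i) = distr M borel (\<sigma> 0)"
    and pos: "AE x in M. 0 < \<sigma> 0 x"
    and slow: "\<And>v. 0 < v \<Longrightarrow> ((\<lambda>u. tailL M (\<sigma> 0) (u * v) / tailL M (\<sigma> 0) u) \<longlongrightarrow> 1) at_top"
    and Lcont: "continuous_on UNIV (tailL M (\<sigma> 0))"
    and g_lim: "(g \<longlongrightarrow> 0) at_top"
    and g_dec: "\<exists>u0. \<forall>x y. u0 \<le> x \<longrightarrow> x \<le> y \<longrightarrow> g y \<le> g x"
    and k_lim: "\<And>v. 0 < v \<Longrightarrow>
       ((\<lambda>u. (tailL M (\<sigma> 0) (u * v) / tailL M (\<sigma> 0) u - 1) / g u) \<longlongrightarrow> k v) at_top"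
    and k_nontriv: "\<exists>v>0. k v \<noteq> 0 \<and> (\<forall>u>0. k (u * v) \<noteq> k u)"
begin

sublocale prob_space M by (rule P)

definition F :: "real \<Rightarrow> real" where "F u = prob {x\<in>space M. u < \<sigma> 0 x}"
abbreviation L where "L \<equiv> tailL M (\<sigma> 0)"

lemma L_F: "L u = 1 / F u" by (simp add: tailL_def F_def)

lemma sets_gt[measurable]: "{x\<in>space M. u < \<sigma> i x} \<in> sets M"
  using rv[of i] by measurable

lemma F_anti: "u \<le> w \<Longrightarrow> F w \<le> F u"
  unfolding F_def by (intro finite_measure_mono) auto

lemma F_le1: "F u \<le> 1" unfolding F_def by simp
lemma F_ge0: "0 \<le> F u" unfolding F_def by simp

lemma F_nonpos: assumes "u \<le> 0" shows "F u = 1"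
proof -
  have "AE x in M. u < \<sigma> 0 x" using pos by eventually_elim (use assms in auto)
  then show ?thesis unfolding F_def by (subst prob_Collect_eq_1) auto
qed

lemma F_pos: "0 < F u"
proof -
  have "\<forall>\<^sub>F w in at_top. L (w * 1) / L w > 0"
    using order_tendstoD(1)[OF slow[of 1], of 0] by simp
  then obtain w0 where w0: "\<And>w. w \<ge> w0 \<Longrightarrow> L (w * 1) / L w > 0"
    by (auto simp: eventually_at_top_linorder)
  have "L (max u w0) \<noteq> 0" using w0[of "max u w0"] by auto
  then have "F (max u w0) \<noteq> 0" by (simp add: L_F)
  then have "F (max u w0) > 0" using F_ge0 by (simp add: order_less_le)
  moreover have "F (max u w0) \<le> F u" by (rule F_anti) simp
  ultimately show ?thesis by simp
qed

lemma F_lim: "(F \<longlongrightarrow> 0) at_top"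
proof -
  let ?A = "\<lambda>n::nat. {x\<in>space M. real n < \<sigma> 0 x}"
  have dec: "decseq ?A" by (auto simp: decseq_def)
  have "(\<lambda>n. measure M (?A n)) \<longlonglongrightarrow> measure M (\<Inter>n. ?A n)"
    by (rule finite_Lim_measure_decseq) (use dec in auto)
  moreover have "(\<Inter>n. ?A n) = {}"
  proof safe
    fix x assume "x \<in> (\<Inter>n. ?A n)"
    then have "real (nat \<lceil>\<sigma> 0 x\<rceil>) < \<sigma> 0 x" by blast
    then show "x \<in> {}" by linarith
  qed
  ultimately have lim: "(\<lambda>n. F (real n)) \<longlonglongrightarrow> 0" by (simp add: F_def)
  show ?thesis
  proof (rule order_tendstoI)
    fix a :: real assume a: "a < 0"
    have "\<forall>x. a < F x" using F_ge0 a by (meson less_le_trans)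
    then show "\<forall>\<^sub>F x in at_top. a < F x" by (simp add: always_eventually)
  next
    fix a :: real assume "0 < a"
    have "\<forall>\<^sub>F n in sequentially. F (real n) < a" using lim \<open>0 < a\<close> by (rule order_tendstoD(2))
    then obtain n where "F (real n) < a" by (auto simp: eventually_sequentially)
    then show "\<forall>\<^sub>F x in at_top. F x < a"
      unfolding eventually_at_top_linorder by (intro exI[of _ "real n"]) (auto intro: le_less_trans F_anti)
  qed
qed

lemma L_mono: "u \<le> w \<Longrightarrow> L u \<le> L w"
  unfolding L_F using F_pos F_anti by (simp add: frac_le)

lemma L_ge1: "1 \<le> L u" unfolding L_F using F_pos F_le1 by simp

lemma L_nonpos: "u \<le> 0 \<Longrightarrow> L u = 1" unfolding L_F using F_nonpos by simp

lemma L_big: "\<exists>x. y < L x"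
proof -
  have "\<forall>\<^sub>F x in at_top. F x < 1 / (max y 1)" using F_lim by (rule order_tendstoD) simp
  then obtain x where "F x < 1 / max y 1" by (auto simp: eventually_at_top_linorder)
  moreover have "0 < F x" by (rule F_pos)
  ultimately have "max y 1 * F x < 1" by (simp add: field_simps)
  then have "max y 1 < 1 / F x" by (rule iffD2[OF pos_less_divide_eq[OF F_pos]])
  then show ?thesis by (intro exI[of _ x]) (auto simp: L_F)
qed

lemma L_isCont: "isCont L x" using Lcont by (simp add: continuous_on_eq_continuous_at)

lemma bdd_L: assumes "1 \<le> y" shows "bdd_below {x. y < L x}"
proof (rule bdd_belowI)
  fix x assume "x \<in> {x. y < L x}"
  then have "y < L x" by simp
  show "0 \<le> x"
  proof (rule ccontr)
    assume "\<not> 0 \<le> x" then have "L x = 1" by (intro L_nonpos) simp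
    then show False using \<open>y < L x\<close> assms by simp
  qed
qed

lemma inv_lim: "(\<lambda>n. 1 / real (Suc n)) \<longlonglongrightarrow> 0"
  using LIMSEQ_inverse_real_of_nat by (simp add: inverse_eq_divide)

lemma rc_inv_eq: assumes "1 \<le> y" shows "L (rc_inv L y) = y"
proof -
  define S where "S = {x. y < L x}"
  have ne: "S \<noteq> {}" using L_big by (auto simp: S_def)
  have bdd: "bdd_below S"
    unfolding S_def using assms by (rule bdd_L)
  define s where "s = Inf S"
  have rs: "rc_inv L y = s" by (simp add: rc_inv_def s_def S_def)
  have le: "L s \<le> y"
  proof -
    have "(\<lambda>n. L (s - 1 / real (Suc n))) \<longlonglongrightarrow> L s"
      using isCont_tendsto_compose[OF L_isCont tendsto_diff[OF tendsto_const inv_lim, of s]] by simp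
    moreover have "L (s - 1 / real (Suc n)) \<le> y" for n
    proof -
      have "s - 1 / real (Suc n) \<notin> S"
      proof
        assume "s - 1 / real (Suc n) \<in> S"
        then have "s \<le> s - 1 / real (Suc n)" unfolding s_def by (rule cInf_lower[OF _ bdd])
        then show False by simp
      qed
      then show ?thesis by (simp add: S_def)
    qed
    ultimately show ?thesis by (intro LIMSEQ_le_const2) auto
  qed
  have ge: "y \<le> L s"
  proof -
    have "(\<lambda>n. L (s + 1 / real (Suc n))) \<longlonglongrightarrow> L s"
      using isCont_tendsto_compose[OF L_isCont tendsto_add[OF tendsto_const inv_lim, of s]] by simp
    moreover have "y \<le> L (s + 1 / real (Suc n))" for n
    proof -
      have "Inf S < s + 1 / real (Suc n)" by (simp add: s_def)
      then obtain x where "x \<in> S" "x < s + 1 / real (Suc n)" using cInf_lessD[OF ne] by blast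
      then show ?thesis using L_mono[of x "s + 1 / real (Suc n)"] by (simp add: S_def)
    qed
    ultimately show ?thesis by (intro LIMSEQ_le_const) auto
  qed
  show ?thesis using le ge rs by simp
qed

lemma rc_inv_mono: assumes "1 \<le> y1" "y1 \<le> y2" shows "rc_inv L y1 \<le> rc_inv L y2"
proof -
  have ne: "{x. y2 < L x} \<noteq> {}" using L_big by auto
  have bdd: "bdd_below {x. y1 < L x}"
    using assms by (intro bdd_L) simp
  show ?thesis unfolding rc_inv_def
    by (rule cInf_superset_mono[OF ne bdd]) (use assms in auto)
qed

lemma rc_inv_pos: assumes "1 < y" shows "0 < rc_inv L y"
  using rc_inv_eq[of y] assms L_nonpos[of "rc_inv L y"] by (cases "rc_inv L y \<le> 0") auto

lemma rc_inv_big: "\<exists>Y. \<forall>y\<ge>Y. B < rc_inv L y"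
proof (intro exI[of _ "max 1 (L B + 1)"] allI impI)
  fix y assume y: "max 1 (L B + 1) \<le> y"
  show "B < rc_inv L y"
  proof (rule ccontr)
    assume "\<not> B < rc_inv L y"
    then have "L (rc_inv L y) \<le> L B" by (intro L_mono) simp
    then show False using rc_inv_eq[of y] y by simp
  qed
qed

lemma rc_inv_lim: "filterlim (rc_inv L) at_top at_top"
  unfolding filterlim_at_top eventually_at_top_linorder
  using rc_inv_big by (meson less_imp_le)

end


context bsetup begin

definition Q :: "real \<Rightarrow> real \<Rightarrow> real" where "Q v u = (L (u * v) / L u - 1) / g u"

lemma k_limQ: "0 < v \<Longrightarrow> (Q v \<longlongrightarrow> k v) at_top"
  using k_lim[of v] unfolding Q_def .

lemma g_pos_dec: "\<exists>U. \<forall>x\<ge>U. 0 < g x \<and> (\<forall>y\<ge>x. g y \<le> g x)"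
proof -
  obtain u0 where u0: "\<And>x y. u0 \<le> x \<Longrightarrow> x \<le> y \<Longrightarrow> g y \<le> g x" using g_dec by blast
  have nn: "0 \<le> g x" if "u0 \<le> x" for x
  proof (rule tendsto_le[OF trivial_limit_at_top_linorder tendsto_const g_lim])
    show "\<forall>\<^sub>F y in at_top. g y \<le> g x"
      unfolding eventually_at_top_linorder using u0 that by blast
  qed
  have "0 < g x" if "u0 \<le> x" for x
  proof (rule ccontr)
    assume "\<not> 0 < g x"
    then have gx: "g x = 0" using nn[OF that] by simp
    have z: "g y = 0" if "x \<le> y" for y using u0[OF \<open>u0 \<le> x\<close> that] nn[of y] \<open>u0 \<le> x\<close> that gx by simp
    have "k v = 0" if "0 < v" for v
    proof -
      have "\<forall>\<^sub>F u in at_top. Q v u = 0"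
        unfolding eventually_at_top_linorder using z by (auto simp: Q_def)
      then have "(Q v \<longlongrightarrow> 0) at_top" by (rule tendsto_eventually)
      then show ?thesis using tendsto_unique[OF trivial_limit_at_top_linorder k_limQ[OF that]] by simp
    qed
    then show False using k_nontriv by auto
  qed
  then show ?thesis using u0 by blast
qed

lemma L_pos: "0 < L u" using L_ge1[of u] by simp

lemma k_one: "k 1 = 0"
proof -
  have "Q 1 u = 0" for u
  proof -
    have "L (u * 1) / L u = 1" using L_pos[of u] by simp
    then show ?thesis by (simp add: Q_def)
  qed
  then have "\<forall>\<^sub>F u in at_top. Q 1 u = 0" by simp
  then have "(Q 1 \<longlongrightarrow> 0) at_top" by (rule tendsto_eventually)
  then show ?thesis using tendsto_unique[OF trivial_limit_at_top_linorder k_limQ] by simp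
qed

lemma k_mono: assumes "0 < w1" "w1 \<le> w2" shows "k w1 \<le> k w2"
proof (rule tendsto_le[OF trivial_limit_at_top_linorder k_limQ k_limQ])
  obtain U where U: "\<And>x. x \<ge> U \<Longrightarrow> 0 < g x" using g_pos_dec by blast
  show "\<forall>\<^sub>F u in at_top. Q w1 u \<le> Q w2 u"
    unfolding eventually_at_top_linorder
  proof (intro exI[of _ "max U 0"] allI impI)
    fix u assume u: "max U 0 \<le> u"
    have "L (u * w1) \<le> L (u * w2)" using u assms by (intro L_mono mult_left_mono) auto
    then have "L (u * w1) / L u - 1 \<le> L (u * w2) / L u - 1"
      using L_pos[of u] by (simp add: divide_right_mono)
    then show "Q w1 u \<le> Q w2 u" unfolding Q_def using U[of u] u by (simp add: divide_right_mono)
  qed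
qed (use assms in auto)

lemma comp_lim: assumes "0 < (u::real)" "(f \<longlongrightarrow> (l::real)) at_top" shows "((\<lambda>t. f (t * u)) \<longlongrightarrow> l) at_top"
proof -
  have "filterlim (\<lambda>t. t * u) at_top at_top"
    unfolding filterlim_at_top eventually_at_top_linorder
  proof (intro allI)
    fix Z show "\<exists>N. \<forall>t\<ge>N. Z \<le> t * u"
      using assms(1) by (intro exI[of _ "Z / u"] allI impI) (simp add: pos_divide_le_eq)
  qed
  then show ?thesis using assms(2) by (rule filterlim_compose[rotated])
qed

lemma k_shift: assumes u: "1 \<le> u" and w: "0 < w" and kw: "k w = 0" shows "k (u * w) = k u"
proof -
  obtain U where U: "\<And>x. x \<ge> U \<Longrightarrow> 0 < g x \<and> (\<forall>y\<ge>x. g y \<le> g x)" using g_pos_dec by blast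
  define \<alpha> where "\<alpha> t = Q w (t * u)" for t
  define \<beta> where "\<beta> t = Q u t" for t
  define \<rho> where "\<rho> t = g (t * u) / g t" for t
  have a0: "(\<alpha> \<longlongrightarrow> 0) at_top" unfolding \<alpha>_def using comp_lim[OF _ k_limQ[OF w], of u] u kw by simp
  have b: "(\<beta> \<longlongrightarrow> k u) at_top" unfolding \<beta>_def using k_limQ[of u] u by simp
  have g0: "((\<lambda>t. g (t * u)) \<longlongrightarrow> 0) at_top" using comp_lim[OF _ g_lim, of u] u by simp
  have ra: "((\<lambda>t. \<rho> t * \<alpha> t) \<longlongrightarrow> 0) at_top"
  proof (rule tendsto_0_le[OF a0, of _ 1])
    show "\<forall>\<^sub>F t in at_top. norm (\<rho> t * \<alpha> t) \<le> norm (\<alpha> t) * 1"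
      unfolding eventually_at_top_linorder
    proof (intro exI[of _ "max U 0"] allI impI)
      fix t assume t: "max U 0 \<le> t"
      have tu: "t \<le> t * u" using t u by (simp add: mult_le_cancel_left1)
      have "0 < g t" "0 < g (t * u)" "g (t * u) \<le> g t" using U[of t] U[of "t*u"] t tu by auto
      then have "0 \<le> \<rho> t" "\<rho> t \<le> 1" unfolding \<rho>_def by auto
      then show "norm (\<rho> t * \<alpha> t) \<le> norm (\<alpha> t) * 1"
        by (simp add: abs_mult mult_left_le_one_le)
    qed
  qed
  have lim: "((\<lambda>t. \<rho> t * \<alpha> t + \<beta> t + g (t * u) * \<alpha> t * \<beta> t) \<longlongrightarrow> 0 + k u + 0 * 0 * k u) at_top"
    by (intro tendsto_add tendsto_mult ra b g0 a0)
  have ev: "\<forall>\<^sub>F t in at_top. Q (u * w) t = \<rho> t * \<alpha> t + \<beta> t + g (t * u) * \<alpha> t * \<beta> t"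
    unfolding eventually_at_top_linorder
  proof (intro exI[of _ "max U 0"] allI impI)
    fix t assume t: "max U 0 \<le> t"
    have tu: "t \<le> t * u" using t u by (simp add: mult_le_cancel_left1)
    have gt: "g t \<noteq> 0" and gtu: "g (t * u) \<noteq> 0" using U[of t] U[of "t*u"] t tu by auto
    have A: "L (t * u * w) / L (t * u) = 1 + g (t * u) * \<alpha> t"
      unfolding \<alpha>_def Q_def using gtu by simp
    have B: "L (t * u) / L t = 1 + g t * \<beta> t"
      unfolding \<beta>_def Q_def using gt by simp
    have "L (t * (u * w)) / L t = (L (t * u * w) / L (t * u)) * (L (t * u) / L t)"
      using L_pos[of "t*u"] by (simp add: mult.assoc)
    also have "\<dots> = (1 + g (t * u) * \<alpha> t) * (1 + g t * \<beta> t)" using A B by simp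
    finally have "Q (u * w) t = ((1 + g (t * u) * \<alpha> t) * (1 + g t * \<beta> t) - 1) / g t"
      unfolding Q_def by simp
    also have "\<dots> = \<rho> t * \<alpha> t + \<beta> t + g (t * u) * \<alpha> t * \<beta> t"
      unfolding \<rho>_def using gt by (simp add: field_simps)
    finally show "Q (u * w) t = \<rho> t * \<alpha> t + \<beta> t + g (t * u) * \<alpha> t * \<beta> t" .
  qed
  have "(Q (u * w) \<longlongrightarrow> k u) at_top"
    using lim ev by (simp add: tendsto_cong)
  then show ?thesis using tendsto_unique[OF trivial_limit_at_top_linorder k_limQ] u w by simp
qed

lemma k_neg: assumes "0 < v" "v < 1" shows "k v < 0"
proof (rule ccontr)
  assume "\<not> k v < 0"
  moreover have "k v \<le> 0" using k_mono[of v 1] k_one assms by simp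
  ultimately have kv: "k v = 0" by simp
  have base: "k z = 0" if "v \<le> z" "z \<le> 1" for z
    using k_mono[of v z] k_mono[of z 1] k_one kv that assms by simp
  have ind: "\<forall>z. v \<le> z \<and> z \<le> (1/v)^n \<longrightarrow> k z = 0" for n
  proof (induction n)
    case 0 then show ?case using base by simp
  next
    case (Suc n)
    show ?case
    proof (intro allI impI)
      fix z assume z: "v \<le> z \<and> z \<le> (1/v)^Suc n"
      show "k z = 0"
      proof (cases "z \<le> (1/v)^n")
        case True then show ?thesis using Suc z by blast
      next
        case False
        have p1: "1 \<le> (1/v)^n" using assms by (simp add: one_le_power)
        have z1: "1 \<le> z" using False p1 by simp
        define w where "w = (1/v)^n / z"
        have zpos: "0 < z" using z1 by simp
        have w1: "w \<le> 1" using False zpos by (simp add: w_def)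
        have wv: "v \<le> w"
        proof -
          have "z \<le> (1/v)^n / v" using z by simp
          then have "z * v \<le> (1/v)^n" by (simp add: pos_le_divide_eq[OF assms(1)])
          then show ?thesis unfolding w_def by (subst pos_le_divide_eq[OF zpos]) (simp add: mult.commute)
        qed
        have kw: "k w = 0" using base wv w1 by simp
        have "k (z * w) = k z" using k_shift[OF z1 _ kw] wv assms by simp
        moreover have "z * w = (1/v)^n" using zpos by (simp add: w_def)
        moreover have "k ((1/v)^n) = 0"
        proof -
          have "v \<le> (1/v)^n" using p1 assms(2) by linarith
          then show ?thesis using Suc.IH by blast
        qed
        ultimately show ?thesis by simp
      qed
    qed
  qed
  have all: "k z = 0" if "v \<le> z" for z
  proof -
    obtain n where "z < (1/v)^n" using real_arch_pow[of "1/v" z] assms by auto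
    then show ?thesis using ind[of n] that by simp
  qed
  obtain vs where vs: "0 < vs" "k vs \<noteq> 0" "\<And>u. 0 < u \<Longrightarrow> k (u * vs) \<noteq> k u" using k_nontriv by blast
  show False
  proof (cases "v \<le> vs")
    case True then show False using all vs by simp
  next
    case False
    have "k (1 / vs * vs) \<noteq> k (1 / vs)" using vs(3)[of "1/vs"] vs(1) by simp
    moreover have "1 / vs \<ge> v"
    proof -
      have "v * vs \<le> 1" using False vs(1) assms by (intro mult_le_one) auto
      then show ?thesis using vs(1) by (simp add: pos_le_divide_eq)
    qed
    ultimately show False using all[of 1] all[of "1/vs"] vs(1) assms by simp
  qed
qed

end


definition PEv :: "nat set \<Rightarrow> nat \<Rightarrow> real \<Rightarrow> real \<Rightarrow> (nat \<Rightarrow> real) \<Rightarrow> bool" where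
  "PEv B K a b f = (\<exists>S\<in>{S. S \<subseteq> B \<and> card S = K}. (\<forall>i\<in>S. a < f i \<and> f i \<le> b) \<and> (\<forall>i\<in>B-S. f i \<le> a))"

lemma PEv_local: "B \<subseteq> A \<Longrightarrow> PEv B K a b (\<lambda>i\<in>A. f i) = PEv B K a b f"
  unfolding PEv_def by (intro bex_cong conj_cong ball_cong refl) auto

lemma pred_comp_lt: "i \<in> A \<Longrightarrow> Measurable.pred (PiM A (\<lambda>_. borel)) (\<lambda>f. a < (f i :: real))"
  by measurable
lemma pred_comp_le: "i \<in> A \<Longrightarrow> Measurable.pred (PiM A (\<lambda>_. borel)) (\<lambda>f. (f i :: real) \<le> a)"
  by measurable

lemma PEv_meas: assumes "B \<subseteq> A" "finite B" shows "Measurable.pred (PiM A (\<lambda>_. borel)) (PEv B K a b)"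
proof -
  have fin: "finite {S. S \<subseteq> B \<and> card S = K}" using assms(2) by simp
  show ?thesis unfolding PEv_def
  proof (rule pred_intros_finite(4)[OF fin])
    fix S assume S: "S \<in> {S. S \<subseteq> B \<and> card S = K}"
    have fS: "finite S" using S assms(2) finite_subset by auto
    have A1: "Measurable.pred (PiM A (\<lambda>_. borel)) (\<lambda>x. \<forall>i\<in>S. a < x i \<and> x i \<le> b)"
    proof (rule pred_intros_finite(3)[OF fS])
      fix i assume "i \<in> S" then have "i \<in> A" using S assms by auto
      then show "Measurable.pred (PiM A (\<lambda>_. borel)) (\<lambda>x. a < x i \<and> x i \<le> b)"
        by (intro pred_intros_logic(3) pred_comp_lt pred_comp_le)
    qed
    have A2: "Measurable.pred (PiM A (\<lambda>_. borel)) (\<lambda>x. \<forall>i\<in>B - S. x i \<le> a)"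
    proof (rule pred_intros_finite(3))
      show "finite (B - S)" using assms(2) by simp
      fix i assume "i \<in> B - S" then have "i \<in> A" using assms by auto
      then show "Measurable.pred (PiM A (\<lambda>_. borel)) (\<lambda>x. x i \<le> a)" by (rule pred_comp_le)
    qed
    show "Measurable.pred (PiM A (\<lambda>_. borel)) (\<lambda>x. (\<forall>i\<in>S. a < x i \<and> x i \<le> b) \<and> (\<forall>i\<in>B - S. x i \<le> a))"
      using A1 A2 by (rule pred_intros_logic(3))
  qed
qed

context bsetup begin

lemma prob_shift: "X \<in> sets borel \<Longrightarrow> prob (\<sigma> i -` X \<inter> space M) = prob (\<sigma> 0 -` X \<inter> space M)"
  using measure_distr[OF rv[of i], of X] measure_distr[OF rv[of 0], of X] ident[of i] by simp

lemma prob_gt: "prob {x\<in>space M. a < \<sigma> i x} = F a"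
proof -
  have "prob {x\<in>space M. a < \<sigma> i x} = prob (\<sigma> i -` {a<..} \<inter> space M)" by (rule arg_cong[where f=prob]) auto
  also have "\<dots> = prob (\<sigma> 0 -` {a<..} \<inter> space M)" by (rule prob_shift) simp
  also have "\<dots> = F a" unfolding F_def by (rule arg_cong[where f=prob]) auto
  finally show ?thesis .
qed

lemma prob_le: "prob (\<sigma> i -` {..a} \<inter> space M) = 1 - F a"
proof -
  have "\<sigma> i -` {..a} \<inter> space M = space M - {x\<in>space M. a < \<sigma> i x}" by auto
  then show ?thesis using prob_compl[of "{x\<in>space M. a < \<sigma> i x}"] prob_gt by simp
qed

lemma prob_ab: assumes "a \<le> b" shows "prob (\<sigma> i -` {a<..b} \<inter> space M) = F a - F b"
proof -
  have "\<sigma> i -` {a<..b} \<inter> space M = {x\<in>space M. a < \<sigma> i x} - {x\<in>space M. b < \<sigma> i x}" by auto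
  moreover have "{x\<in>space M. b < \<sigma> i x} \<subseteq> {x\<in>space M. a < \<sigma> i x}" using assms by auto
  ultimately show ?thesis using finite_measure_Diff[of "{x\<in>space M. a < \<sigma> i x}" "{x\<in>space M. b < \<sigma> i x}"] prob_gt
    by simp
qed

lemma prob_exceed: "prob {x\<in>space M. \<exists>i<T. a < \<sigma> i x} \<le> real T * F a"
proof -
  have "{x\<in>space M. \<exists>i<T. a < \<sigma> i x} = (\<Union>i<T. {x\<in>space M. a < \<sigma> i x})" by auto
  also have "prob \<dots> \<le> (\<Sum>i<T. prob {x\<in>space M. a < \<sigma> i x})" by (rule measure_UNION_le) auto
  also have "\<dots> = real T * F a" using prob_gt by simp
  finally show ?thesis .
qed

definition Ev :: "nat set \<Rightarrow> nat \<Rightarrow> real \<Rightarrow> real \<Rightarrow> 'a set" where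
  "Ev B K a b = {\<omega>\<in>space M. PEv B K a b (\<lambda>i. \<sigma> i \<omega>)}"

lemma rv_vec: "(\<lambda>\<omega>. \<lambda>i\<in>A. \<sigma> i \<omega>) \<in> measurable M (PiM A (\<lambda>_. borel))"
  using rv by (auto intro!: measurable_restrict)

lemma sets_pred_vec: assumes "Measurable.pred (PiM A (\<lambda>_. borel)) P"
  shows "{\<omega>\<in>space M. P (\<lambda>i\<in>A. \<sigma> i \<omega>)} \<in> sets M"
  using measurable_compose[OF rv_vec assms] by (simp add: pred_def)

lemma Ev_sets: "finite B \<Longrightarrow> Ev B K a b \<in> sets M"
  using sets_pred_vec[OF PEv_meas[of B B K a b]] by (simp add: Ev_def PEv_local)

lemma prob_Ev:
  assumes B: "finite B" "B \<noteq> {}" and ab: "a \<le> b"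
  shows "prob (Ev B K a b) = real (card B choose K) * (F a - F b) ^ K * (1 - F a) ^ (card B - K)"
proof -
  define Sub where "Sub = {S. S \<subseteq> B \<and> card S = K}"
  define C where "C S = (\<Inter>i\<in>B. \<sigma> i -` (if i \<in> S then {a<..b} else {..a}) \<inter> space M)" for S
  have EvU: "Ev B K a b = (\<Union>S\<in>Sub. C S)"
  proof (intro set_eqI iffI)
    fix \<omega> assume "\<omega> \<in> Ev B K a b"
    then obtain S where S: "S \<in> Sub" "\<omega> \<in> space M" "\<forall>i\<in>S. a < \<sigma> i \<omega> \<and> \<sigma> i \<omega> \<le> b" "\<forall>i\<in>B-S. \<sigma> i \<omega> \<le> a"
      unfolding Ev_def PEv_def Sub_def by blast
    then have "\<omega> \<in> C S" unfolding C_def by auto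
    then show "\<omega> \<in> (\<Union>S\<in>Sub. C S)" using S(1) by blast
  next
    fix \<omega> assume "\<omega> \<in> (\<Union>S\<in>Sub. C S)"
    then obtain S where S: "S \<in> Sub" "\<omega> \<in> C S" by blast
    have sp: "\<omega> \<in> space M" using S(2) B(2) unfolding C_def by auto
    have mem: "\<forall>i\<in>B. \<sigma> i \<omega> \<in> (if i \<in> S then {a<..b} else {..a})"
      using S(2) unfolding C_def by blast
    have SB: "S \<subseteq> B" using S(1) by (simp add: Sub_def)
    have m1: "\<sigma> i \<omega> \<in> {a<..b}" if "i \<in> S" for i using mem SB that by fastforce
    have m2: "\<sigma> i \<omega> \<in> {..a}" if "i \<in> B - S" for i using mem that by fastforce
    have "(\<forall>i\<in>S. a < \<sigma> i \<omega> \<and> \<sigma> i \<omega> \<le> b) \<and> (\<forall>i\<in>B-S. \<sigma> i \<omega> \<le> a)"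
      using m1 m2 by auto
    then show "\<omega> \<in> Ev B K a b" using S(1) sp unfolding Ev_def PEv_def Sub_def by blast
  qed
  have Csets: "C S \<in> sets M" for S
    unfolding C_def using B rv by (intro sets.finite_INT) auto
  have disj: "disjoint_family_on C Sub"
    unfolding disjoint_family_on_def
  proof (intro ballI impI)
    fix S1 S2 assume S: "S1 \<in> Sub" "S2 \<in> Sub" "S1 \<noteq> S2"
    have "\<exists>i\<in>B. (i \<in> S1) \<noteq> (i \<in> S2)" using S unfolding Sub_def by blast
    then obtain i where i: "i \<in> B" "(i \<in> S1) \<noteq> (i \<in> S2)" by blast
    { fix \<omega> assume "\<omega> \<in> C S1" "\<omega> \<in> C S2"
      then have "\<sigma> i \<omega> \<in> (if i \<in> S1 then {a<..b} else {..a})" "\<sigma> i \<omega> \<in> (if i \<in> S2 then {a<..b} else {..a})"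
        using i(1) unfolding C_def by blast+
      then have False using i(2) by (cases "i \<in> S1") auto }
    then show "C S1 \<inter> C S2 = {}" by blast
  qed
  have pC: "prob (C S) = (F a - F b) ^ K * (1 - F a) ^ (card B - K)" if "S \<in> Sub" for S
  proof -
    have SB: "S \<subseteq> B" "card S = K" using that by (auto simp: Sub_def)
    have "prob (C S) = (\<Prod>i\<in>B. prob (\<sigma> i -` (if i \<in> S then {a<..b} else {..a}) \<inter> space M))"
      unfolding C_def by (rule indep_varsD[OF indep B(2) B(1)]) auto
    also have "\<dots> = (\<Prod>i\<in>B. if i \<in> S then F a - F b else 1 - F a)"
      by (intro prod.cong refl) (auto simp: prob_ab[OF ab] prob_le)
    also have "\<dots> = (\<Prod>i\<in>S. F a - F b) * (\<Prod>i\<in>B - S. 1 - F a)"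
      using prod.If_cases[OF B(1), of "\<lambda>i. i \<in> S" "\<lambda>_. F a - F b" "\<lambda>_. 1 - F a"] SB
      by (simp add: Int_absorb1 Diff_eq[symmetric] Int_commute)
    also have "\<dots> = (F a - F b) ^ K * (1 - F a) ^ (card B - K)"
      using SB B(1) by (simp add: card_Diff_subset finite_subset)
    finally show ?thesis .
  qed
  have "prob (Ev B K a b) = (\<Sum>S\<in>Sub. prob (C S))"
    unfolding EvU by (rule finite_measure_finite_Union) (use B disj Csets in \<open>auto simp: Sub_def\<close>)
  also have "\<dots> = real (card Sub) * ((F a - F b) ^ K * (1 - F a) ^ (card B - K))" using pC by simp
  also have "card Sub = card B choose K" unfolding Sub_def by (rule n_subsets[OF B(1)])
  finally show ?thesis by simp
qed

lemma prob_EvU: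
  assumes B: "finite B" and K: "1 \<le> K" and c: "mono (c :: nat \<Rightarrow> real)" and J: "finite J"
  shows "prob (\<Union>j\<in>J. Ev B K (c (j - 1)) (c j)) = (\<Sum>j\<in>J. prob (Ev B K (c (j - 1)) (c j)))"
proof (rule finite_measure_finite_Union[OF J])
  show "(\<lambda>j. Ev B K (c (j - 1)) (c j)) ` J \<subseteq> sets M" using Ev_sets[OF B] by auto
  have key: "Ev B K (c (j1 - 1)) (c j1) \<inter> Ev B K (c (j2 - 1)) (c j2) = {}" if "j1 < j2" for j1 j2
  proof (rule ccontr)
    assume "\<not> ?thesis"
    then obtain \<omega> where w1: "PEv B K (c (j1 - 1)) (c j1) (\<lambda>i. \<sigma> i \<omega>)" and w2: "PEv B K (c (j2 - 1)) (c j2) (\<lambda>i. \<sigma> i \<omega>)"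
      unfolding Ev_def by blast
    from w2 obtain S2 where S2: "S2 \<subseteq> B" "card S2 = K" "\<forall>i\<in>S2. c (j2 - 1) < \<sigma> i \<omega>" unfolding PEv_def by blast
    from S2 K obtain i where i: "i \<in> S2" by (metis card.empty ex_in_conv not_one_le_zero)
    from w1 obtain S1 where S1: "S1 \<subseteq> B" "\<forall>i\<in>S1. \<sigma> i \<omega> \<le> c j1" "\<forall>i\<in>B-S1. \<sigma> i \<omega> \<le> c (j1 - 1)"
      unfolding PEv_def by blast
    have "c (j1 - 1) \<le> c j1" using c by (auto intro: monoD)
    have "\<sigma> i \<omega> \<le> c j1"
    proof (cases "i \<in> S1")
      case True then show ?thesis using S1 by blast
    next
      case False then have "i \<in> B - S1" using i S2(1) by blast
      then show ?thesis using S1(3) \<open>c (j1 - 1) \<le> c j1\<close> by force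
    qed
    moreover have "c j1 \<le> c (j2 - 1)" using c that by (auto intro: monoD)
    moreover have "c (j2 - 1) < \<sigma> i \<omega>" using S2(3) i by blast
    ultimately show False by linarith
  qed
  show "disjoint_family_on (\<lambda>j. Ev B K (c (j - 1)) (c j)) J"
    unfolding disjoint_family_on_def
  proof (intro ballI impI)
    fix j1 j2 assume "j1 \<in> J" "j2 \<in> J" "j1 \<noteq> j2"
    then show "Ev B K (c (j1 - 1)) (c j1) \<inter> Ev B K (c (j2 - 1)) (c j2) = {}"
      using key[of j1 j2] key[of j2 j1] by (cases "j1 < j2") (auto simp: Int_commute)
  qed
qed

lemma indep_pred:
  assumes AB: "A \<inter> B = {}" and P: "Measurable.pred (PiM A (\<lambda>_. borel)) P" and Q: "Measurable.pred (PiM B (\<lambda>_. borel)) Qp"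
  shows "prob {\<omega>\<in>space M. P (\<lambda>i\<in>A. \<sigma> i \<omega>) \<and> Qp (\<lambda>i\<in>B. \<sigma> i \<omega>)}
       = prob {\<omega>\<in>space M. P (\<lambda>i\<in>A. \<sigma> i \<omega>)} * prob {\<omega>\<in>space M. Qp (\<lambda>i\<in>B. \<sigma> i \<omega>)}"
proof -
  have iv: "indep_var (PiM A (\<lambda>_. borel)) (\<lambda>\<omega>. \<lambda>i\<in>A. \<sigma> i \<omega>) (PiM B (\<lambda>_. borel)) (\<lambda>\<omega>. \<lambda>i\<in>B. \<sigma> i \<omega>)"
    by (rule indep_var_restrict[OF indep AB]) auto
  have sA: "{f\<in>space (PiM A (\<lambda>_. borel)). P f} \<in> sets (PiM A (\<lambda>_. borel))" using P by (simp add: pred_def)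
  have sB: "{f\<in>space (PiM B (\<lambda>_. borel)). Qp f} \<in> sets (PiM B (\<lambda>_. borel))" using Q by (simp add: pred_def)
  note * = indep_varD[OF iv sA sB]
  have e1: "(\<lambda>x. (\<lambda>i\<in>A. \<sigma> i x, \<lambda>i\<in>B. \<sigma> i x)) -` ({f\<in>space (PiM A (\<lambda>_. borel)). P f} \<times> {f\<in>space (PiM B (\<lambda>_. borel)). Qp f}) \<inter> space M
      = {\<omega>\<in>space M. P (\<lambda>i\<in>A. \<sigma> i \<omega>) \<and> Qp (\<lambda>i\<in>B. \<sigma> i \<omega>)}" by (auto simp: space_PiM)
  have e2: "(\<lambda>\<omega>. \<lambda>i\<in>A. \<sigma> i \<omega>) -` {f\<in>space (PiM A (\<lambda>_. borel)). P f} \<inter> space M = {\<omega>\<in>space M. P (\<lambda>i\<in>A. \<sigma> i \<omega>)}"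
    by (auto simp: space_PiM)
  have e3: "(\<lambda>\<omega>. \<lambda>i\<in>B. \<sigma> i \<omega>) -` {f\<in>space (PiM B (\<lambda>_. borel)). Qp f} \<inter> space M = {\<omega>\<in>space M. Qp (\<lambda>i\<in>B. \<sigma> i \<omega>)}"
    by (auto simp: space_PiM)
  show ?thesis using * unfolding e1 e2 e3 .
qed

end


lemma sum_div_group: "(\<Sum>m<n*C. f (m div C)) = real C * (\<Sum>i<n. f i :: real)"
proof -
  have "(\<Sum>m<n*C. f (m div C)) = (\<Sum>i<n. \<Sum>m\<in>{i*C..<i*C+C}. f (m div C))"
    by (rule sum.nat_group[symmetric])
  also have "\<dots> = (\<Sum>i<n. \<Sum>m\<in>{i*C..<i*C+C}. f i)"
  proof (intro sum.cong refl)
    fix i m assume *: "m \<in> {i*C..<i*C+C}"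
    have h1: "C * i \<le> m" using * by (simp add: mult.commute)
    have h2: "m < C * Suc i" using * by (simp add: mult.commute)
    have "m div C = i" by (rule div_nat_eqI[OF h1 h2])
    then show "f (m div C) = f i" by simp
  qed
  also have "\<dots> = real C * (\<Sum>i<n. f i)" by (simp add: sum_distrib_left)
  finally show ?thesis .
qed

lemma summable_from_mult_nice:
  fixes h :: "nat \<Rightarrow> real"
  assumes C: "1 \<le> C" and nn: "\<And>n. 0 \<le> h n" and dec: "\<And>n p. n \<le> p \<Longrightarrow> h p \<le> h n"
    and s: "summable (\<lambda>n. h (C * n))"
  shows "summable h"
proof -
  define w where "w m = h (C * (m div C))" for m
  have hw: "h m \<le> w m" for m unfolding w_def by (rule dec) (simp add: mult.commute)
  have ws: "summable w"
  proof (rule summableI_nonneg_bounded)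
    show "0 \<le> w n" for n using nn by (simp add: w_def)
    fix n
    have nC: "n * 1 \<le> n * C" by (rule mult_le_mono2[OF C])
    have sub: "{..<n} \<subseteq> {..<n*C}" using nC by auto
    have "(\<Sum>i<n. w i) \<le> (\<Sum>i<n*C. w i)"
      by (rule sum_mono2[OF finite_lessThan sub]) (simp add: w_def nn)
    also have "\<dots> = real C * (\<Sum>i<n. h (C * i))" unfolding w_def by (rule sum_div_group)
    also have "\<dots> \<le> real C * (\<Sum>i. h (C * i))"
      using C by (intro mult_left_mono sum_le_suminf s) (auto simp: nn)
    finally show "(\<Sum>i<n. w i) \<le> real C * (\<Sum>i. h (C * i))" .
  qed
  show ?thesis by (rule summable_comparison_test[OF _ ws]) (use hw nn in auto)
qed

lemma summable_from_mult:
  fixes h :: "nat \<Rightarrow> real"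
  assumes C: "1 \<le> C" and nn: "\<And>n. n \<ge> N \<Longrightarrow> 0 \<le> h n" and dec: "\<And>n p. N \<le> n \<Longrightarrow> n \<le> p \<Longrightarrow> h p \<le> h n"
    and s: "summable (\<lambda>n. h (C * n))"
  shows "summable h"
proof -
  define h2 where "h2 n = h (n + C * N)" for n
  have "summable (\<lambda>n. h (C * n + C * N))"
    using s summable_iff_shift[of "\<lambda>n. h (C * n)" N] by (simp add: algebra_simps)
  then have s2: "summable (\<lambda>n. h2 (C * n))" by (simp add: h2_def)
  have CN: "C * N \<ge> N" using C by simp
  have "summable h2"
  proof (rule summable_from_mult_nice[OF C _ _ s2])
    show "0 \<le> h2 n" for n unfolding h2_def using CN by (intro nn) linarith
    show "h2 p \<le> h2 n" if "n \<le> p" for n p unfolding h2_def using CN that by (intro dec) linarith+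
  qed
  then show ?thesis unfolding h2_def[abs_def] by simp
qed

locale blk = bsetup +
  fixes K :: nat and v :: real and R :: nat
  assumes K1: "1 \<le> K" and v0: "0 < v" and v1: "v < 1" and R3: "3 \<le> R"
begin

definition c :: "nat \<Rightarrow> real" where "c j = (1/v)^j"
definition m :: "nat \<Rightarrow> nat" where "m n = R^n - R^(n-1)"
definition x :: "nat \<Rightarrow> real" where "x n = rc_inv L (2 * real (m n))"
definition y :: "nat \<Rightarrow> real" where "y n = rc_inv L (8 * real (m n))"
definition lam :: real where "lam = ln (1/v)"
definition a :: "nat \<Rightarrow> nat" where "a n = nat \<lceil>ln (x n) / lam\<rceil>"
definition b :: "nat \<Rightarrow> nat" where "b n = nat \<lfloor>ln (y n) / lam\<rfloor>"
definition J :: "nat \<Rightarrow> nat set" where "J n = {Suc (a n) .. b n}"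
definition Bk :: "nat \<Rightarrow> nat set" where "Bk n = {R^(n-1) ..< R^n}"
definition PE :: "nat \<Rightarrow> (nat \<Rightarrow> real) \<Rightarrow> bool" where "PE n f = (\<exists>j\<in>J n. PEv (Bk n) K (c (j-1)) (c j) f)"
definition PG :: "nat \<Rightarrow> (nat \<Rightarrow> real) \<Rightarrow> bool" where "PG n f = (\<forall>i<R^(n-1). f i \<le> x n)"
definition E :: "nat \<Rightarrow> 'a set" where "E n = {\<omega>\<in>space M. PE n (\<lambda>i. \<sigma> i \<omega>)}"
definition G :: "nat \<Rightarrow> 'a set" where "G n = {\<omega>\<in>space M. PG n (\<lambda>i. \<sigma> i \<omega>)}"
definition alpha :: real where "alpha = - k v / 2"

lemma lam_pos: "0 < lam" using v0 v1 by (simp add: lam_def)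
lemma alpha_pos: "0 < alpha" using k_neg[OF v0 v1] by (simp add: alpha_def)

lemma c_exp: "c j = exp (real j * lam)"
proof -
  have "c j = exp (ln (1/v)) ^ j" using v0 by (simp add: c_def)
  also have "\<dots> = exp (real j * lam)" by (simp add: exp_of_nat_mult lam_def)
  finally show ?thesis .
qed

lemma c_pos: "0 < c j" by (simp add: c_exp)

lemma c_mono: "mono c"
  unfolding mono_def c_exp using lam_pos by (auto intro: mult_right_mono)

lemma c_Suc: "c (Suc j) = c j / v" by (simp add: c_def)
lemma c_pred: "1 \<le> j \<Longrightarrow> c (j - 1) = v * c j"
  using v0 by (cases j) (auto simp: c_def)

lemma c_ge: assumes "0 < z" "ln z / lam \<le> real j" shows "z \<le> c j"
proof -
  have "ln z \<le> real j * lam" using assms(2) lam_pos by (simp add: pos_divide_le_eq)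
  then have "exp (ln z) \<le> c j" unfolding c_exp by simp
  then show ?thesis using assms(1) by simp
qed

lemma c_le: assumes "0 < z" "real j \<le> ln z / lam" shows "c j \<le> z"
proof -
  have "real j * lam \<le> ln z" using assms(2) lam_pos by (simp add: pos_le_divide_eq)
  then have "c j \<le> exp (ln z)" unfolding c_exp by simp
  then show ?thesis using assms(1) by simp
qed

lemma c_le_inv: assumes "0 < z" "c j \<le> z" shows "real j \<le> ln z / lam"
proof -
  have "ln (c j) \<le> ln z" using assms c_pos by simp
  then have "real j * lam \<le> ln z" by (simp add: c_exp)
  then show ?thesis using lam_pos by (simp add: pos_le_divide_eq)
qed

lemma c_gt: assumes "0 < z" "ln z / lam - 1 < real j" shows "v * z < c j"
proof -
  have "ln z - lam < real j * lam" using assms(2) lam_pos by (simp add: pos_divide_less_eq algebra_simps)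
  then have "exp (ln z - lam) < c j" unfolding c_exp by simp
  moreover have "exp (ln z - lam) = v * z" using assms(1) v0 by (simp add: exp_diff lam_def)
  ultimately show ?thesis by simp
qed

lemma c_lt: assumes "0 < z" "real j < ln z / lam + 1" shows "c j < z / v"
proof -
  have "real j - 1 < ln z / lam" using assms(2) by simp
  then have "(real j - 1) * lam < ln z" using lam_pos by (simp add: pos_less_divide_eq)
  then have "real j * lam < ln z + lam" by (simp add: algebra_simps)
  then have "c j < exp (ln z + lam)" unfolding c_exp by simp
  moreover have "exp (ln z + lam) = z / v" using assms(1) v0 by (simp add: exp_add lam_def)
  ultimately show ?thesis by simp
qed

lemma m_eq: "1 \<le> n \<Longrightarrow> m n = R^(n-1) * (R - 1)"
  by (cases n) (auto simp: m_def algebra_simps)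

lemma m_ge: "1 \<le> n \<Longrightarrow> real (m n) \<ge> 2 * real R^(n-1)"
proof -
  assume n: "1 \<le> n"
  have "real (m n) = real R^(n-1) * (real R - 1)" using m_eq[OF n] R3 by (simp add: of_nat_diff)
  also have "\<dots> \<ge> real R^(n-1) * 2" using R3 by (intro mult_left_mono) auto
  finally show ?thesis by simp
qed

lemma m_lim: "filterlim (\<lambda>n. real (m n)) at_top sequentially"
proof (rule filterlim_at_top_mono[of "\<lambda>n. 2 * real R^(n-1)"])
  show "\<forall>\<^sub>F n in sequentially. 2 * real R^(n-1) \<le> real (m n)"
    by (rule eventually_sequentiallyI[of 1]) (rule m_ge)
  have "filterlim (\<lambda>n. real R^n) at_top sequentially"
    unfolding filterlim_at_top eventually_sequentially
  proof (intro allI)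
    fix Z :: real
    obtain N where N: "Z < real R^N" using real_arch_pow[of "real R" Z] R3 by auto
    have "Z \<le> real R^n" if "N \<le> n" for n
    proof -
      have "real R^N \<le> real R^n" using that R3 by (intro power_increasing) auto
      then show ?thesis using N by simp
    qed
    then show "\<exists>N. \<forall>n\<ge>N. Z \<le> real R^n" by blast
  qed
  then have "filterlim (\<lambda>n. real R^(n-1)) at_top sequentially"
    by (rule filterlim_compose) (rule filterlim_minus_const_nat_at_top)
  then show "filterlim (\<lambda>n. 2 * real R^(n-1)) at_top sequentially"
    by (intro filterlim_tendsto_pos_mult_at_top[OF tendsto_const]) auto
qed

lemma x_lim: "filterlim x at_top sequentially"
  unfolding x_def
  by (rule filterlim_compose[OF rc_inv_lim]) (intro filterlim_tendsto_pos_mult_at_top[OF tendsto_const _ m_lim], simp)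

lemma y_lim: "filterlim y at_top sequentially"
  unfolding y_def
  by (rule filterlim_compose[OF rc_inv_lim]) (intro filterlim_tendsto_pos_mult_at_top[OF tendsto_const _ m_lim], simp)

end


lemma telescope_from: "a \<le> b \<Longrightarrow> (\<Sum>j\<in>{Suc a..b}. f (j - 1) - f j) = f a - (f b :: real)"
proof (induction b)
  case 0 then show ?case by simp
next
  case (Suc b)
  show ?case
  proof (cases "a \<le> b")
    case True
    have "{Suc a..Suc b} = insert (Suc b) {Suc a..b}" using True by auto
    then have "(\<Sum>j\<in>{Suc a..Suc b}. f (j - 1) - f j) = (f b - f (Suc b)) + (\<Sum>j\<in>{Suc a..b}. f (j - 1) - f j)"
      by simp
    then show ?thesis using Suc.IH[OF True] by simp
  next
    case False then have "a = Suc b" using Suc.prems by simp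
    then show ?thesis by simp
  qed
qed

context blk begin

lemma U_exists: "\<exists>U. \<forall>u\<ge>U. 0 < g u \<and> (\<forall>w\<ge>u. g w \<le> g u) \<and> L (u * v) / L u - 1 \<le> - alpha * g u"
proof -
  obtain U1 where U1: "\<And>u. u \<ge> U1 \<Longrightarrow> 0 < g u \<and> (\<forall>w\<ge>u. g w \<le> g u)" using g_pos_dec by blast
  have kv: "k v < 0" using k_neg[OF v0 v1] .
  have "\<forall>\<^sub>F u in at_top. Q v u < k v / 2"
    using order_tendstoD(2)[OF k_limQ[OF v0], of "k v / 2"] kv by simp
  then obtain U2 where U2: "\<And>u. u \<ge> U2 \<Longrightarrow> Q v u < k v / 2" by (auto simp: eventually_at_top_linorder)
  show ?thesis
  proof (intro exI[of _ "max U1 U2"] allI impI)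
    fix u assume u: "max U1 U2 \<le> u"
    then have gu: "0 < g u" using U1 by auto
    have gd: "\<forall>w\<ge>u. g w \<le> g u" using U1 u by auto
    have "(L (u * v) / L u - 1) / g u < k v / 2" using U2 u by (auto simp: Q_def)
    then have "L (u * v) / L u - 1 < k v / 2 * g u" using gu by (simp add: pos_divide_less_eq)
    then have "L (u * v) / L u - 1 \<le> - alpha * g u" by (simp add: alpha_def)
    then show "0 < g u \<and> (\<forall>w\<ge>u. g w \<le> g u) \<and> L (u * v) / L u - 1 \<le> - alpha * g u" using gu gd by blast
  qed
qed

lemma conds: "\<exists>n1. \<forall>n\<ge>n1. 1 \<le> n \<and> 2*K \<le> m n \<and> 1 \<le> x n \<and> U \<le> x n
    \<and> L (x n * (1/v^2)) \<le> 2 * L (x n) \<and> 3/4 * L (y n) \<le> L (y n * v)"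
proof -
  have e1: "\<forall>\<^sub>F n in sequentially. 1 \<le> n" by (rule eventually_ge_at_top)
  have e2: "\<forall>\<^sub>F n in sequentially. real (2*K) \<le> real (m n)"
    using m_lim unfolding filterlim_at_top by blast
  have e3: "\<forall>\<^sub>F n in sequentially. max 1 U \<le> x n"
    using x_lim unfolding filterlim_at_top by blast
  have r1: "((\<lambda>n. L (x n * (1/v^2)) / L (x n)) \<longlongrightarrow> 1) sequentially"
    using filterlim_compose[OF slow x_lim, of "1/v^2"] v0 by simp
  have e4: "\<forall>\<^sub>F n in sequentially. L (x n * (1/v^2)) / L (x n) < 2"
    using r1 by (rule order_tendstoD) simp
  have r2: "((\<lambda>n. L (y n * v) / L (y n)) \<longlongrightarrow> 1) sequentially"
    using filterlim_compose[OF slow y_lim, of v] v0 by simp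
  have e5: "\<forall>\<^sub>F n in sequentially. 3/4 < L (y n * v) / L (y n)"
    using r2 by (rule order_tendstoD) simp
  have "\<forall>\<^sub>F n in sequentially. 1 \<le> n \<and> 2*K \<le> m n \<and> 1 \<le> x n \<and> U \<le> x n
    \<and> L (x n * (1/v^2)) \<le> 2 * L (x n) \<and> 3/4 * L (y n) \<le> L (y n * v)"
    using e1 e2 e3 e4 e5
  proof eventually_elim
    case (elim n)
    have "L (x n * (1/v^2)) \<le> 2 * L (x n)" using elim(4) L_pos[of "x n"] by (simp add: divide_less_eq)
    moreover have "3/4 * L (y n) \<le> L (y n * v)" using elim(5) L_pos[of "y n"] by (simp add: less_divide_eq)
    ultimately show ?case using elim(1-3) by (simp del: of_nat_mult add: of_nat_mult[symmetric])
  qed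
  then show ?thesis unfolding eventually_sequentially by blast
qed

lemma q_lower:
  assumes U: "\<forall>u\<ge>U. 0 < g u \<and> (\<forall>w\<ge>u. g w \<le> g u) \<and> L (u * v) / L u - 1 \<le> - alpha * g u"
    and u: "U \<le> u"
  shows "alpha * g u / L u \<le> F (u * v) - F u"
proof -
  define z where "z = alpha * g u"
  have z0: "0 \<le> z" using U u alpha_pos by (auto simp: z_def)
  have "L (u * v) / L u \<le> 1 - z" using U u by (auto simp: z_def)
  then have Luv: "L (u * v) \<le> L u * (1 - z)" using L_pos[of u] by (simp add: divide_le_eq mult.commute)
  have z1: "0 < 1 - z" using Luv L_pos[of u] L_pos[of "u * v"] by (smt (verit) mult_nonpos_nonneg mult_le_0_iff)
  have "F (u * v) = 1 / L (u * v)" using L_F F_pos by (simp add: field_simps)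
  also have "\<dots> \<ge> 1 / (L u * (1 - z))" using Luv L_pos[of "u * v"] L_pos[of u] z1 by (intro divide_left_mono) auto
  finally have Fuv: "1 / (L u * (1 - z)) \<le> F (u * v)" .
  have Fu: "F u = 1 / L u" using L_F F_pos by (simp add: field_simps)
  have "z / L u \<le> 1 / (L u * (1 - z)) - 1 / L u"
  proof -
    have "z \<le> z / (1 - z)" using z0 z1 by (simp add: le_divide_eq) (simp add: algebra_simps)
    also have "z / (1 - z) = 1 / (1 - z) - 1" using z1 by (simp add: field_simps)
    finally have "z / L u \<le> (1 / (1 - z) - 1) / L u" using L_pos[of u] by (simp add: divide_right_mono)
    also have "\<dots> = 1 / (L u * (1 - z)) - 1 / L u" using z1 L_pos[of u] by (simp add: field_simps)
    finally show ?thesis .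
  qed
  then show ?thesis using Fuv Fu by (simp add: z_def)
qed

end


context blk begin

lemma E_eq: "E n = (\<Union>j\<in>J n. Ev (Bk n) K (c (j - 1)) (c j))"
  unfolding E_def PE_def Ev_def by auto

lemma Bk_fin: "finite (Bk n)" by (simp add: Bk_def)
lemma Bk_card: "card (Bk n) = m n" by (simp add: Bk_def m_def)

lemma E_sets: "E n \<in> sets M"
  unfolding E_eq using Ev_sets[OF Bk_fin] by (auto simp: J_def)

lemma E_lower_n:
  assumes U: "\<forall>u\<ge>U. 0 < g u \<and> (\<forall>w\<ge>u. g w \<le> g u) \<and> L (u * v) / L u - 1 \<le> - alpha * g u"
    and n: "1 \<le> n" "2*K \<le> m n" "1 \<le> x n" "U \<le> x n"
      "L (x n * (1/v^2)) \<le> 2 * L (x n)" "3/4 * L (y n) \<le> L (y n * v)"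
  shows "(alpha/8)^(K-1) / (24 * real K ^ K) * g (y n)^(K-1) \<le> prob (E n)"
proof -
  define mm where "mm = real (m n)"
  define X where "X = x n"
  define Y where "Y = y n"
  define A where "A = a n"
  define Bb where "Bb = b n"
  have mm2: "2 \<le> mm" using n(2) K1 by (simp add: mm_def)
  have LX: "L X = 2 * mm" unfolding X_def x_def mm_def by (rule rc_inv_eq) (use mm2 mm_def in simp)
  have LY: "L Y = 8 * mm" unfolding Y_def y_def mm_def by (rule rc_inv_eq) (use mm2 mm_def in simp)
  have X1: "1 \<le> X" using n(3) by (simp add: X_def)
  have XU: "U \<le> X" using n(4) by (simp add: X_def)
  have XY: "X \<le> Y" unfolding X_def Y_def x_def y_def by (rule rc_inv_mono) (use mm2 mm_def in simp_all)
  have FL: "F u = 1 / L u" for u using L_F[of u] F_pos[of u] by simp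
  have FX: "F X = 1 / (2 * mm)" using FL[of X] LX by simp
  have lnX: "0 \<le> ln X / lam" using X1 lam_pos by simp
  have lnY: "0 \<le> ln Y / lam" using X1 XY lam_pos by simp
  have cA1: "X \<le> c A" unfolding A_def a_def X_def using X1 X_def by (intro c_ge) (auto simp: real_nat_ceiling_ge)
  have cA2: "c A < X / v"
  proof (rule c_lt)
    show "0 < X" using X1 by simp
    have "real (nat \<lceil>ln X / lam\<rceil>) = real_of_int \<lceil>ln X / lam\<rceil>" using lnX by simp
    then show "real A < ln X / lam + 1" unfolding A_def a_def X_def by linarith
  qed
  have Xv: "X / v \<le> X * (1/v^2)"
  proof -
    have "1/v \<le> 1/v^2" using v0 v1 by (simp add: divide_le_eq power2_eq_square)
    then show ?thesis using X1 by (simp add: divide_inverse mult_left_mono)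
  qed
  have cSA: "c (Suc A) \<le> X * (1/v^2)"
  proof -
    have "c (Suc A) = c A / v" by (rule c_Suc)
    also have "\<dots> < X / v / v" by (rule divide_strict_right_mono[OF cA2 v0])
    also have "\<dots> = X * (1/v^2)" by (simp add: power2_eq_square)
    finally show ?thesis by simp
  qed
  have LXv: "L (X * (1/v^2)) \<le> 4 * mm" using n(5) LX by (simp add: X_def)
  have cSAY: "c (Suc A) \<le> Y"
  proof (rule ccontr)
    assume "\<not> c (Suc A) \<le> Y"
    then have "L Y \<le> L (c (Suc A))" by (intro L_mono) simp
    also have "\<dots> \<le> L (X * (1/v^2))" using cSA by (rule L_mono)
    finally show False using LY LXv mm2 by simp
  qed
  have AB: "Suc A \<le> Bb"
  proof -
    have "real (Suc A) \<le> ln Y / lam" using cSAY X1 XY by (intro c_le_inv) auto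
    then have "int (Suc A) \<le> \<lfloor>ln Y / lam\<rfloor>" by (simp add: le_floor_iff)
    then show ?thesis unfolding Bb_def b_def Y_def by simp
  qed
  have cB1: "c Bb \<le> Y" unfolding Bb_def b_def Y_def using X1 XY lnY Y_def by (intro c_le) (auto simp: of_nat_floor)
  have cB2: "v * Y < c Bb"
  proof (rule c_gt)
    show "0 < Y" using X1 XY by simp
    have "real (nat \<lfloor>ln Y / lam\<rfloor>) = real_of_int \<lfloor>ln Y / lam\<rfloor>" using lnY by simp
    then show "ln Y / lam - 1 < real Bb" unfolding Bb_def b_def Y_def by linarith
  qed
  have Bne: "Bk n \<noteq> {}"
  proof
    assume "Bk n = {}" then have "m n = 0" using Bk_card[of n] by simp
    then show False using n(2) K1 by simp
  qed
  have Jn: "J n = {Suc A..Bb}" by (simp add: J_def A_def Bb_def)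
  define ql where "ql = alpha * g Y / (8 * mm)"
  have gY: "0 < g Y" using U XU XY by auto
  have ql0: "0 \<le> ql" using alpha_pos gY mm2 by (simp add: ql_def)
  define q where "q j = F (c (j - 1)) - F (c j)" for j
  define p where "p j = 1 - F (c (j - 1))" for j
  have jfacts: "X \<le> c (j - 1) \<and> c j \<le> Y \<and> c (j - 1) = c j * v" if "j \<in> J n" for j
  proof -
    have j: "Suc A \<le> j" "j \<le> Bb" using that Jn by auto
    have "c A \<le> c (j - 1)" using c_mono j(1) by (auto intro: monoD)
    moreover have "c j \<le> c Bb" using c_mono j(2) by (auto intro: monoD)
    moreover have "c (j - 1) = c j * v" using c_pred[of j] j(1) by (simp add: mult.commute)
    ultimately show ?thesis using cA1 cB1 by simp
  qed
  have q_ge: "ql \<le> q j" if "j \<in> J n" for j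
  proof -
    note jf = jfacts[OF that]
    have cj: "U \<le> c j" using jf XU c_mono by (smt (verit) mult_le_cancel_left1 v1 c_pos mult.commute)
    have "alpha * g (c j) / L (c j) \<le> F (c j * v) - F (c j)" by (rule q_lower[OF U cj])
    moreover have "ql \<le> alpha * g (c j) / L (c j)"
    proof -
      have g1: "g Y \<le> g (c j)" using U cj jf by auto
      have L1: "L (c j) \<le> 8 * mm" using L_mono[of "c j" Y] jf LY by simp
      have "ql = alpha * g Y / (8 * mm)" by (simp add: ql_def)
      also have "\<dots> \<le> alpha * g (c j) / (8 * mm)"
        using g1 alpha_pos mm2 by (intro divide_right_mono mult_left_mono) auto
      also have "\<dots> \<le> alpha * g (c j) / L (c j)"
        using L1 L_pos[of "c j"] alpha_pos gY g1 by (intro divide_left_mono) auto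
      finally show ?thesis .
    qed
    ultimately show ?thesis using jf by (simp add: q_def)
  qed
  have p_ge: "1/2 \<le> p j ^ (m n - K)" if "j \<in> J n" for j
  proof -
    note jf = jfacts[OF that]
    have p1: "p j \<le> 1" using F_ge0 by (simp add: p_def)
    have p2: "1 + (- 1 / (2 * mm)) \<le> p j" using F_anti[of X "c (j - 1)"] jf FX by (simp add: p_def)
    have h: "1 / (2 * mm) \<le> 1" using mm2 by simp
    have p0: "0 \<le> p j" using p2 h by simp
    have "1 + real (m n) * (- 1 / (2 * mm)) \<le> (1 + (- 1 / (2 * mm))) ^ (m n)"
      by (rule Bernoulli_inequality) (use mm2 in simp)
    also have "\<dots> \<le> p j ^ (m n)" using p2 mm2 by (intro power_mono) auto
    also have "\<dots> \<le> p j ^ (m n - K)" using p1 p0 by (intro power_decreasing) auto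
    finally show ?thesis using mm2 by (simp add: mm_def)
  qed
  have term_ge: "(mm / real K) ^ K * (1/2) * ql ^ (K - 1) * q j \<le> prob (Ev (Bk n) K (c (j - 1)) (c j))"
    if "j \<in> J n" for j
  proof -
    note jf = jfacts[OF that]
    have q0: "0 \<le> q j" using q_ge[OF that] ql0 by simp
    have pe: "prob (Ev (Bk n) K (c (j - 1)) (c j)) = real (m n choose K) * q j ^ K * p j ^ (m n - K)"
      unfolding q_def p_def Bk_card[symmetric]
      by (rule prob_Ev[OF Bk_fin]) (use Bne jf c_pos v0 v1 in \<open>auto intro!: mult_left_le_one_le less_imp_le\<close>)
    have b1: "(mm / real K) ^ K \<le> real (m n choose K)"
      unfolding mm_def by (rule binomial_ge_n_over_k_pow_k) (use n(2) in simp)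
    have b2: "ql ^ (K - 1) * q j \<le> q j ^ K"
    proof -
      have "ql ^ (K - 1) * q j \<le> q j ^ (K - 1) * q j"
        using q_ge[OF that] ql0 q0 by (intro mult_right_mono power_mono) auto
      also have "\<dots> = q j ^ K" using K1 by (cases K) (auto simp: mult.commute)
      finally show ?thesis .
    qed
    have "(mm / real K) ^ K * (1/2) * ql ^ (K - 1) * q j = (mm / real K) ^ K * (ql ^ (K - 1) * q j) * (1/2)"
      by simp
    also have "\<dots> \<le> real (m n choose K) * q j ^ K * p j ^ (m n - K)"
      using b1 b2 p_ge[OF that] ql0 q0 mm2 by (intro mult_mono) auto
    finally show ?thesis using pe by simp
  qed
  have sumq: "1 / (12 * mm) \<le> (\<Sum>j\<in>J n. q j)"
  proof -
    have "(\<Sum>j\<in>J n. q j) = F (c A) - F (c Bb)" unfolding Jn q_def by (rule telescope_from) (use AB in simp)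
    moreover have "1 / (4 * mm) \<le> F (c A)"
    proof -
      have "F (X * (1/v^2)) \<le> F (c A)" using cA2 Xv by (intro F_anti) simp
      moreover have "F (X * (1/v^2)) = 1 / L (X * (1/v^2))" by (rule FL)
      moreover have "1 / (4 * mm) \<le> 1 / L (X * (1/v^2))" using LXv L_pos mm2 by (intro divide_left_mono) auto
      ultimately show ?thesis by simp
    qed
    moreover have "F (c Bb) \<le> 1 / (6 * mm)"
    proof -
      have "F (c Bb) \<le> F (Y * v)" using cB2 by (intro F_anti) (simp add: mult.commute)
      moreover have "F (Y * v) = 1 / L (Y * v)" by (rule FL)
      moreover have "6 * mm \<le> L (Y * v)" using n(6) LY by (simp add: Y_def)
      then have "1 / L (Y * v) \<le> 1 / (6 * mm)" using mm2 by (intro divide_left_mono) auto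
      ultimately show ?thesis by simp
    qed
    moreover have "1/(4*mm) - 1/(6*mm) = 1/(12*mm)" using mm2 by (simp add: field_simps)
    ultimately show ?thesis by linarith
  qed
  have "prob (E n) = (\<Sum>j\<in>J n. prob (Ev (Bk n) K (c (j - 1)) (c j)))"
    unfolding E_eq by (rule prob_EvU[OF Bk_fin K1 c_mono]) (simp add: J_def)
  also have "\<dots> \<ge> (\<Sum>j\<in>J n. (mm / real K) ^ K * (1/2) * ql ^ (K - 1) * q j)"
    by (intro sum_mono term_ge)
  finally have h1: "(mm / real K) ^ K * (1/2) * ql ^ (K - 1) * (\<Sum>j\<in>J n. q j) \<le> prob (E n)"
    by (simp add: sum_distrib_left)
  have h2: "(mm / real K) ^ K * (1/2) * ql ^ (K - 1) * (1 / (12 * mm)) \<le>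
      (mm / real K) ^ K * (1/2) * ql ^ (K - 1) * (\<Sum>j\<in>J n. q j)"
    using sumq ql0 mm2 by (intro mult_left_mono) auto
  have h3: "(mm / real K) ^ K * (1/2) * ql ^ (K - 1) * (1 / (12 * mm))
      = (alpha/8)^(K-1) / (24 * real K ^ K) * g (y n)^(K-1)"
  proof -
    obtain K' where K': "K = Suc K'" using K1 by (cases K) auto
    show ?thesis unfolding ql_def Y_def K' using mm2 K1
      by (simp add: power_divide power_mult_distrib field_simps)
  qed
  show ?thesis using h1 h2 h3 by linarith
qed

end


context blk begin

lemma E_lower: "\<exists>C>0. \<exists>n1. \<forall>n\<ge>n1. C * g (y n)^(K-1) \<le> prob (E n)"
proof -
  obtain U where U: "\<forall>u\<ge>U. 0 < g u \<and> (\<forall>w\<ge>u. g w \<le> g u) \<and> L (u * v) / L u - 1 \<le> - alpha * g u"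
    using U_exists by blast
  obtain n1 where n1: "\<forall>n\<ge>n1. 1 \<le> n \<and> 2*K \<le> m n \<and> 1 \<le> x n \<and> U \<le> x n
    \<and> L (x n * (1/v^2)) \<le> 2 * L (x n) \<and> 3/4 * L (y n) \<le> L (y n * v)"
    using conds by blast
  have "0 < (alpha/8)^(K-1) / (24 * real K ^ K)" using alpha_pos K1 by simp
  moreover have "\<forall>n\<ge>n1. (alpha/8)^(K-1) / (24 * real K ^ K) * g (y n)^(K-1) \<le> prob (E n)"
    using n1 E_lower_n[OF U] by blast
  ultimately show ?thesis by blast
qed

lemma m_le: "m n \<le> R^n" by (simp add: m_def)

lemma exp3: "8 \<le> exp (3::real)"
proof -
  have "2 \<le> exp (1::real)" using exp_ge_add_one_self[of 1] by simp
  then have "2^3 \<le> exp (1::real)^3" by (intro power_mono) auto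
  also have "exp (1::real)^3 = exp 3" by (simp add: exp_of_nat_mult[symmetric])
  finally show ?thesis by simp
qed

lemma E_not_summable:
  assumes div: "\<not> summable (\<lambda>n::nat. (g (rc_inv L (exp (real n)))) ^ (K - 1))"
  shows "\<not> summable (\<lambda>n. prob (E n))"
proof
  assume s: "summable (\<lambda>n. prob (E n))"
  define h where "h n = (g (rc_inv L (exp (real n)))) ^ (K - 1)" for n :: nat
  obtain U1 where U1: "\<And>u. u \<ge> U1 \<Longrightarrow> 0 < g u \<and> (\<forall>w\<ge>u. g w \<le> g u)" using g_pos_dec by blast
  obtain Y0 where Y0: "\<And>w. w \<ge> Y0 \<Longrightarrow> U1 < rc_inv L w" using rc_inv_big by blast
  define N0 where "N0 = nat \<lceil>ln (max Y0 1)\<rceil>"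
  have expN0: "max Y0 1 \<le> exp (real n)" if "N0 \<le> n" for n
  proof -
    have "ln (max Y0 1) \<le> real N0" unfolding N0_def by (rule real_nat_ceiling_ge)
    also have "\<dots> \<le> real n" using that by simp
    finally have l: "ln (max Y0 1) \<le> real n" .
    have "max Y0 1 = exp (ln (max Y0 1))" by simp
    also have "\<dots> \<le> exp (real n)" using l by (simp only: exp_le_cancel_iff)
    finally show ?thesis .
  qed
  have hnn: "0 \<le> h n" if "N0 \<le> n" for n
    using U1[of "rc_inv L (exp (real n))"] Y0[of "exp (real n)"] expN0[OF that] by (auto simp: h_def)
  have hdec: "h p \<le> h n" if "N0 \<le> n" "n \<le> p" for n p
  proof -
    have r: "rc_inv L (exp (real n)) \<le> rc_inv L (exp (real p))"
      using that expN0[OF that(1)] by (intro rc_inv_mono) auto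
    have U: "U1 \<le> rc_inv L (exp (real n))" using Y0[of "exp (real n)"] expN0[OF that(1)] by auto
    have "g (rc_inv L (exp (real p))) \<le> g (rc_inv L (exp (real n)))" using U1[OF U] r by auto
    moreover have "0 \<le> g (rc_inv L (exp (real p)))"
      using U1[of "rc_inv L (exp (real p))"] U r by auto
    ultimately show ?thesis unfolding h_def by (intro power_mono)
  qed
  define Cc where "Cc = nat \<lceil>ln (real R)\<rceil> + 3"
  have Cc1: "1 \<le> Cc" by (simp add: Cc_def)
  obtain C n1 where C: "C > 0" and n1: "\<And>n. n \<ge> n1 \<Longrightarrow> C * g (y n)^(K-1) \<le> prob (E n)"
    using E_lower by blast
  obtain n2 where n2: "\<And>n. n \<ge> n2 \<Longrightarrow> U1 \<le> y n"
    using y_lim unfolding filterlim_at_top eventually_sequentially by blast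
  have cmp: "C * h (Cc * n) \<le> prob (E n)" if n: "n \<ge> max (max n1 n2) (max N0 1)" for n
  proof -
    have n1': "1 \<le> n" using n by simp
    have "1 \<le> real R^(n-1)" using R3 by (intro one_le_power) simp
    then have mn: "1 \<le> 8 * real (m n)" using m_ge[OF n1'] by linarith
    have "8 * real (m n) \<le> exp 3 * real R^n" using m_le[of n] exp3
      by (intro mult_mono) (auto simp del: of_nat_power simp: of_nat_power[symmetric])
    also have "\<dots> \<le> exp (real (Cc * n))"
    proof -
      have "real R^n = exp (real n * ln (real R))" using R3 by (simp add: exp_of_nat_mult)
      then have "exp 3 * real R^n = exp (3 + real n * ln (real R))" by (simp add: exp_add)
      also have "\<dots> \<le> exp (real (Cc * n))"
      proof -
        have "ln (real R) \<le> real (nat \<lceil>ln (real R)\<rceil>)" by (rule real_nat_ceiling_ge)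
        then have "real n * ln (real R) \<le> real n * real (nat \<lceil>ln (real R)\<rceil>)" by (intro mult_left_mono) auto
        moreover have "3 \<le> 3 * real n" using n1' by simp
        moreover have "real (Cc * n) = real n * real (nat \<lceil>ln (real R)\<rceil>) + 3 * real n"
          by (simp add: Cc_def algebra_simps)
        ultimately have "3 + real n * ln (real R) \<le> real (Cc * n)" by linarith
        then show ?thesis by simp
      qed
      finally show ?thesis .
    qed
    finally have le: "8 * real (m n) \<le> exp (real (Cc * n))" .
    have r: "y n \<le> rc_inv L (exp (real (Cc * n)))" unfolding y_def using mn le by (rule rc_inv_mono)
    have U: "U1 \<le> y n" using n2 n by simp
    have g1: "g (rc_inv L (exp (real (Cc * n)))) \<le> g (y n)" using U1[OF U] r by auto
    have g0: "0 \<le> g (rc_inv L (exp (real (Cc * n))))" using U1[of "rc_inv L (exp (real (Cc * n)))"] U r by auto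
    have "h (Cc * n) \<le> g (y n)^(K-1)" unfolding h_def using g0 g1 by (intro power_mono)
    then have "C * h (Cc * n) \<le> C * g (y n)^(K-1)" using C by simp
    also have "\<dots> \<le> prob (E n)" using n1 n by simp
    finally show ?thesis .
  qed
  have "summable (\<lambda>n. C * h (Cc * n))"
  proof (rule summable_comparison_test'[OF s])
    fix n assume "n \<ge> max (max n1 n2) (max N0 1)"
    moreover have "N0 \<le> Cc * n" using calculation Cc1 by (metis le_trans max.bounded_iff mult_le_mono1 mult_1)
    ultimately show "norm (C * h (Cc * n)) \<le> prob (E n)" using cmp hnn C by simp
  qed
  then have "summable (\<lambda>n. h (Cc * n))" using C summable_cmult_iff[of C] by simp
  then have "summable h" using summable_from_mult[OF Cc1, of N0 h] hnn hdec by blast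
  moreover have "h = (\<lambda>n. (g (rc_inv L (exp (real n)))) ^ (K - 1))" by (simp add: fun_eq_iff h_def)
  ultimately show False using div by simp
qed

lemma G_compl: assumes "1 \<le> n" shows "prob (space M - G n) \<le> 1 / (2 * (real R - 1))"
proof -
  have eq: "space M - G n = {\<omega>\<in>space M. \<exists>i<R^(n-1). x n < \<sigma> i \<omega>}" by (auto simp: G_def PG_def)
  have "prob (space M - G n) \<le> real (R^(n-1)) * F (x n)" unfolding eq by (rule prob_exceed)
  also have "F (x n) = 1 / (2 * real (m n))"
  proof -
    have "1 \<le> real R^(n-1)" using R3 by (intro one_le_power) simp
    then have mm: "1 \<le> 2 * real (m n)" using m_ge[OF assms] by linarith
    have "L (x n) = 2 * real (m n)" unfolding x_def by (rule rc_inv_eq[OF mm])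
    moreover have "F (x n) = 1 / L (x n)" using L_F[of "x n"] F_pos[of "x n"] by simp
    ultimately show ?thesis by simp
  qed
  also have "real (R^(n-1)) * (1 / (2 * real (m n))) = 1 / (2 * (real R - 1))"
  proof -
    have rm: "real (m n) = real R^(n-1) * (real R - 1)" using m_eq[OF assms] R3 by (simp add: of_nat_diff)
    have p1: "0 < real R^(n-1)" using R3 by simp
    have p2: "0 < real R - 1" using R3 by simp
    show ?thesis unfolding rm using p1 p2 by (simp add: field_simps)
  qed
  finally show ?thesis .
qed

end


context blk begin

lemma G_sets: "G n \<in> sets M"
proof -
  have "G n = {\<omega>\<in>space M. \<forall>i\<in>{..<R^(n-1)}. \<sigma> i \<omega> \<le> x n}" by (auto simp: G_def PG_def)
  also have "\<dots> \<in> sets M" using rv by measurable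
  finally show ?thesis .
qed

lemma pred_PG: assumes "{..<R^(n-1)} \<subseteq> A" shows "Measurable.pred (PiM A (\<lambda>_. borel)) (PG n)"
proof -
  have "PG n = (\<lambda>f. \<forall>i\<in>{..<R^(n-1)}. f i \<le> x n)" by (auto simp: PG_def fun_eq_iff)
  moreover have "Measurable.pred (PiM A (\<lambda>_. borel)) (\<lambda>f. \<forall>i\<in>{..<R^(n-1)}. f i \<le> x n)"
  proof (rule pred_intros_finite(3))
    fix i assume "i \<in> {..<R^(n-1)}" then have "i \<in> A" using assms by auto
    then show "Measurable.pred (PiM A (\<lambda>_. borel)) (\<lambda>f. f i \<le> x n)" by (rule pred_comp_le)
  qed simp
  ultimately show ?thesis by simp
qed

lemma pred_PE: assumes "Bk n \<subseteq> A" shows "Measurable.pred (PiM A (\<lambda>_. borel)) (PE n)"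
  unfolding PE_def
proof (rule pred_intros_finite(4))
  show "finite (J n)" by (simp add: J_def)
  fix j show "Measurable.pred (PiM A (\<lambda>_. borel)) (\<lambda>f. PEv (Bk n) K (c (j - 1)) (c j) f)"
    using PEv_meas[OF assms Bk_fin] by simp
qed

lemma PE_local: "Bk n \<subseteq> A \<Longrightarrow> PE n (\<lambda>i\<in>A. f i) = PE n f"
  unfolding PE_def using PEv_local by simp

lemma PG_local: "{..<R^(n-1)} \<subseteq> A \<Longrightarrow> PG n (\<lambda>i\<in>A. f i) = PG n f"
  unfolding PG_def by auto

definition Z :: "nat \<Rightarrow> nat \<Rightarrow> 'a set" where
  "Z n0 N = space M - (\<Union>n\<in>{n0..<N}. E n \<inter> G n)"

lemma Z_sets: "Z n0 N \<in> sets M"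
  unfolding Z_def using E_sets G_sets by auto

lemma Bk_sub: assumes "n \<le> N'" shows "Bk n \<subseteq> {..<R^N'}"
proof -
  have "R^n \<le> R^N'" using assms R3 by (intro power_increasing) auto
  then show ?thesis by (auto simp: Bk_def)
qed

lemma pre_sub: assumes "n \<le> Suc N'" shows "{..<R^(n-1)} \<subseteq> {..<R^N'}"
proof -
  have "R^(n-1) \<le> R^N'" using assms R3 by (intro power_increasing) auto
  then show ?thesis by auto
qed

lemma Z_indep:
  assumes n0: "1 \<le> n0" "n0 \<le> N"
  shows "prob (Z n0 N \<inter> G N \<inter> E N) = prob (Z n0 N \<inter> G N) * prob (E N)"
proof -
  obtain N' where N': "N = Suc N'" using n0 by (cases N) auto
  define A where "A = {..<R^N'}"
  define P where "P f = ((\<forall>n\<in>{n0..<N}. \<not> (PE n f \<and> PG n f)) \<and> PG N f)" for f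
  have AB: "A \<inter> Bk N = {}" by (auto simp: A_def Bk_def N')
  have predP: "Measurable.pred (PiM A (\<lambda>_. borel)) P"
    unfolding P_def
  proof (intro pred_intros_logic pred_intros_finite(3))
    show "finite {n0..<N}" by simp
    fix n assume n: "n \<in> {n0..<N}"
    have n1: "n \<le> N'" "n \<le> Suc N'" using n N' by auto
    show "Measurable.pred (PiM A (\<lambda>_. borel)) (PE n)" unfolding A_def by (intro pred_PE Bk_sub n1)
    show "Measurable.pred (PiM A (\<lambda>_. borel)) (PG n)" unfolding A_def by (intro pred_PG pre_sub n1)
  next
    show "Measurable.pred (PiM A (\<lambda>_. borel)) (PG N)" unfolding A_def N' by (intro pred_PG pre_sub) simp
  qed
  have predQ: "Measurable.pred (PiM (Bk N) (\<lambda>_. borel)) (PE N)" by (rule pred_PE) simp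
  have locP: "P (\<lambda>i\<in>A. \<sigma> i \<omega>) = P (\<lambda>i. \<sigma> i \<omega>)" for \<omega>
  proof -
    have "PE n (\<lambda>i\<in>A. \<sigma> i \<omega>) = PE n (\<lambda>i. \<sigma> i \<omega>)" if "n \<in> {n0..<N}" for n
    proof -
      have "n \<le> N'" using that N' by auto
      then show ?thesis unfolding A_def by (intro PE_local Bk_sub)
    qed
    moreover have "PG n (\<lambda>i\<in>A. \<sigma> i \<omega>) = PG n (\<lambda>i. \<sigma> i \<omega>)" if "n \<in> {n0..<N}" for n
    proof -
      have "n \<le> Suc N'" using that N' by auto
      then show ?thesis unfolding A_def by (intro PG_local pre_sub)
    qed
    moreover have "PG N (\<lambda>i\<in>A. \<sigma> i \<omega>) = PG N (\<lambda>i. \<sigma> i \<omega>)"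
      unfolding A_def N' by (intro PG_local pre_sub) simp
    ultimately show ?thesis unfolding P_def by simp
  qed
  have locQ: "PE N (\<lambda>i\<in>Bk N. \<sigma> i \<omega>) = PE N (\<lambda>i. \<sigma> i \<omega>)" for \<omega> by (rule PE_local) simp
  have e1: "Z n0 N \<inter> G N \<inter> E N = {\<omega>\<in>space M. P (\<lambda>i\<in>A. \<sigma> i \<omega>) \<and> PE N (\<lambda>i\<in>Bk N. \<sigma> i \<omega>)}"
    unfolding locP locQ by (auto simp: Z_def E_def G_def P_def)
  have e2: "Z n0 N \<inter> G N = {\<omega>\<in>space M. P (\<lambda>i\<in>A. \<sigma> i \<omega>)}"
    unfolding locP by (auto simp: Z_def E_def G_def P_def)
  have e3: "E N = {\<omega>\<in>space M. PE N (\<lambda>i\<in>Bk N. \<sigma> i \<omega>)}"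
    unfolding locQ by (simp add: E_def)
  show ?thesis by (subst e1, subst e2, subst e3, rule indep_pred[OF AB predP predQ])
qed

end


context blk begin

definition beta :: real where "beta = 1 / (2 * (real R - 1))"

lemma Z_step:
  assumes n0: "1 \<le> n0" "n0 \<le> N"
  shows "prob (Z n0 (Suc N)) - beta \<le> (1 - prob (E N)) * (prob (Z n0 N) - beta)"
proof -
  define z where "z = prob (Z n0 N)"
  define w where "w = prob (Z n0 N \<inter> G N)"
  define p where "p = prob (E N)"
  have eq: "Z n0 (Suc N) = Z n0 N - (Z n0 N \<inter> G N \<inter> E N)"
    using n0 by (auto simp: Z_def atLeastLessThanSuc)
  have "prob (Z n0 (Suc N)) = z - prob (Z n0 N \<inter> G N \<inter> E N)"
    unfolding eq z_def
    by (rule finite_measure_Diff) (use Z_sets G_sets E_sets in auto)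
  also have "prob (Z n0 N \<inter> G N \<inter> E N) = w * p"
    unfolding w_def p_def by (rule Z_indep[OF n0])
  finally have z': "prob (Z n0 (Suc N)) = z - w * p" .
  have w1: "z - beta \<le> w"
  proof -
    have "Z n0 N \<subseteq> (Z n0 N \<inter> G N) \<union> (space M - G N)" by (auto simp: Z_def)
    then have "z \<le> prob ((Z n0 N \<inter> G N) \<union> (space M - G N))" unfolding z_def
      by (intro finite_measure_mono) (use Z_sets G_sets in auto)
    also have "\<dots> \<le> w + prob (space M - G N)" unfolding w_def
      by (rule measure_Un_le) (use Z_sets G_sets in auto)
    also have "prob (space M - G N) \<le> beta" unfolding beta_def using n0 by (intro G_compl) simp
    finally show ?thesis by simp
  qed
  have w0: "0 \<le> w" by (simp add: w_def)
  have p0: "0 \<le> p" "p \<le> 1" by (simp_all add: p_def)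
  show ?thesis
  proof (cases "beta \<le> z")
    case True
    have "p * (z - beta) \<le> p * w" using w1 p0 by (intro mult_left_mono) auto
    then show ?thesis unfolding z' by (simp add: z_def[symmetric] p_def[symmetric] algebra_simps)
  next
    case False
    have "0 \<le> w * p" using w0 p0 by simp
    moreover have "z - beta \<le> (1 - p) * (z - beta)"
    proof -
      have "p * (z - beta) \<le> 0" using False p0 by (intro mult_nonneg_nonpos) auto
      then show ?thesis by (simp add: algebra_simps)
    qed
    ultimately show ?thesis unfolding z' by (simp add: z_def[symmetric] p_def[symmetric])
  qed
qed

lemma Z_bound:
  assumes n0: "1 \<le> n0" "n0 \<le> N"
  shows "prob (Z n0 N) - beta \<le> (\<Prod>n\<in>{n0..<N}. (1 - prob (E n)))"
  using n0(2)
proof (induction N rule: dec_induct)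
  case base
  have "Z n0 n0 = space M" by (simp add: Z_def)
  moreover have "0 \<le> beta" using R3 by (simp add: beta_def)
  ultimately show ?case by (simp add: prob_space)
next
  case (step n)
  have "prob (Z n0 (Suc n)) - beta \<le> (1 - prob (E n)) * (prob (Z n0 n) - beta)"
    using n0 step by (intro Z_step) auto
  also have "\<dots> \<le> (1 - prob (E n)) * (\<Prod>n\<in>{n0..<n}. (1 - prob (E n)))"
    using step.IH by (intro mult_left_mono) auto
  also have "\<dots> = (\<Prod>n\<in>{n0..<Suc n}. (1 - prob (E n)))"
    using step by (simp add: atLeastLessThanSuc)
  finally show ?case .
qed

lemma prod_exp: "finite S \<Longrightarrow> (\<Prod>n\<in>S. (1 - prob (E n))) \<le> exp (- (\<Sum>n\<in>S. prob (E n)))"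
proof -
  assume S: "finite S"
  have "(\<Prod>n\<in>S. (1 - prob (E n))) \<le> (\<Prod>n\<in>S. exp (- prob (E n)))"
  proof (rule prod_mono)
    fix n show "0 \<le> 1 - prob (E n) \<and> 1 - prob (E n) \<le> exp (- prob (E n))"
      using exp_ge_add_one_self[of "- prob (E n)"] by simp
  qed
  also have "\<dots> = exp (- (\<Sum>n\<in>S. prob (E n)))" using exp_sum[OF S, of "\<lambda>n. - prob (E n)"] by (simp add: sum_negf)
  finally show ?thesis .
qed

definition W :: "nat \<Rightarrow> 'a set" where "W n0 = space M - (\<Union>n\<in>{n0..}. E n \<inter> G n)"

lemma W_sets: "W n0 \<in> sets M" unfolding W_def using E_sets G_sets by auto

lemma W_bound:
  assumes n0: "1 \<le> n0" and ns: "\<not> summable (\<lambda>n. prob (E n))"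
  shows "prob (W n0) \<le> beta"
proof (rule field_le_epsilon)
  fix \<eta> :: real assume \<eta>: "0 < \<eta>"
  define B where "B = (\<Sum>n<n0. prob (E n)) + \<bar>ln \<eta>\<bar>"
  have "\<exists>N. B < (\<Sum>n<N. prob (E n))"
  proof (rule ccontr)
    assume "\<not> ?thesis"
    then have "summable (\<lambda>n. prob (E n))" by (intro summableI_nonneg_bounded[of _ B]) (auto simp: not_less)
    then show False using ns by simp
  qed
  then obtain N where N: "B < (\<Sum>n<N. prob (E n))" by blast
  have Nn0: "n0 \<le> N"
  proof (rule ccontr)
    assume "\<not> n0 \<le> N"
    then have "(\<Sum>n<N. prob (E n)) \<le> (\<Sum>n<n0. prob (E n))" by (intro sum_mono2) auto
    then show False using N by (simp add: B_def)
  qed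
  have split: "(\<Sum>n<N. prob (E n)) = (\<Sum>n<n0. prob (E n)) + (\<Sum>n\<in>{n0..<N}. prob (E n))"
    using sum.atLeastLessThan_concat[of 0 n0 N "\<lambda>n. prob (E n)"] Nn0 by (simp add: atLeast0LessThan)
  have big: "- ln \<eta> < (\<Sum>n\<in>{n0..<N}. prob (E n))" using N split by (simp add: B_def)
  have "exp (- (\<Sum>n\<in>{n0..<N}. prob (E n))) < exp (ln \<eta>)" using big by simp
  then have small: "exp (- (\<Sum>n\<in>{n0..<N}. prob (E n))) < \<eta>" using \<eta> by simp
  have "W n0 \<subseteq> Z n0 N" by (auto simp: W_def Z_def)
  then have "prob (W n0) \<le> prob (Z n0 N)" using Z_sets by (intro finite_measure_mono) auto
  also have "\<dots> \<le> beta + (\<Prod>n\<in>{n0..<N}. (1 - prob (E n)))" using Z_bound[OF n0 Nn0] by simp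
  also have "\<dots> \<le> beta + \<eta>" using prod_exp[of "{n0..<N}"] small by simp
  finally show "prob (W n0) \<le> beta + \<eta>" .
qed

end


context blk begin

lemma x_pos: "1 \<le> n \<Longrightarrow> 0 < x n"
proof -
  assume n: "1 \<le> n"
  have "1 \<le> real R^(n-1)" using R3 by (intro one_le_power) simp
  then have "1 < 2 * real (m n)" using m_ge[OF n] by linarith
  then show ?thesis unfolding x_def by (rule rc_inv_pos)
qed

lemma success:
  assumes w: "\<omega> \<in> E n \<inter> G n" and posw: "\<And>i. 0 < \<sigma> i \<omega>" and n: "1 \<le> n"
  shows "real K * v < (\<Sum>l\<le>R^n - 1. \<sigma> l \<omega>) / (MAX l\<in>{..R^n - 1}. \<sigma> l \<omega>)"
proof -
  obtain j where j: "j \<in> J n" and pe: "PEv (Bk n) K (c (j - 1)) (c j) (\<lambda>i. \<sigma> i \<omega>)"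
    using w by (auto simp: E_def PE_def)
  obtain S where S: "S \<subseteq> Bk n" "card S = K" "\<forall>l\<in>S. c (j - 1) < \<sigma> l \<omega> \<and> \<sigma> l \<omega> \<le> c j"
    "\<forall>l\<in>Bk n - S. \<sigma> l \<omega> \<le> c (j - 1)"
    using pe unfolding PEv_def by blast
  have pg: "\<forall>l<R^(n-1). \<sigma> l \<omega> \<le> x n" using w by (auto simp: G_def PG_def)
  have j1: "Suc (a n) \<le> j" using j by (simp add: J_def)
  have xc: "x n \<le> c (j - 1)"
  proof -
    have "x n \<le> c (a n)" unfolding a_def using x_pos[OF n] by (intro c_ge) (auto simp: real_nat_ceiling_ge)
    also have "\<dots> \<le> c (j - 1)" using c_mono j1 by (auto intro: monoD)
    finally show ?thesis .
  qed
  have cc: "c (j - 1) \<le> c j" using c_mono by (auto intro: monoD)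
  have Rn: "1 \<le> R^n" using R3 by simp
  have I: "{..R^n - 1} = {..<R^n}" using Rn by auto
  have finS: "finite S" using S(1) Bk_fin finite_subset by blast
  have Sne: "S \<noteq> {}" using S(2) K1 by auto
  have SI: "S \<subseteq> {..<R^n}" using S(1) by (auto simp: Bk_def)
  have le_cj: "\<sigma> l \<omega> \<le> c j" if "l < R^n" for l
  proof (cases "l < R^(n-1)")
    case True then show ?thesis using pg xc cc by force
  next
    case False
    then have "l \<in> Bk n" using that by (simp add: Bk_def)
    then show ?thesis using S(3,4) cc by (cases "l \<in> S") force+
  qed
  define Mx where "Mx = (MAX l\<in>{..<R^n}. \<sigma> l \<omega>)"
  have ne: "{..<R^n} \<noteq> {}" using R3 by (simp add: lessThan_empty_iff)
  have Mx_le: "Mx \<le> c j" unfolding Mx_def using le_cj ne by (subst Max_le_iff) auto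
  obtain l0 where l0: "l0 \<in> S" using Sne by blast
  have Mx_ge: "\<sigma> l0 \<omega> \<le> Mx" unfolding Mx_def using l0 SI by (intro Max_ge) auto
  have Mx_pos: "0 < Mx" using Mx_ge posw[of l0] by simp
  have "real K * c (j - 1) = (\<Sum>l\<in>S. c (j - 1))" using S(2) by simp
  also have "\<dots> < (\<Sum>l\<in>S. \<sigma> l \<omega>)" using finS Sne S(3) by (intro sum_strict_mono) auto
  also have "\<dots> \<le> (\<Sum>l<R^n. \<sigma> l \<omega>)" using SI posw by (intro sum_mono2) (auto intro: less_imp_le)
  finally have sum_gt: "real K * c (j - 1) < (\<Sum>l<R^n. \<sigma> l \<omega>)" .
  have "real K * v * Mx \<le> real K * v * c j" using Mx_le K1 v0 by (intro mult_left_mono) auto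
  also have "\<dots> = real K * c (j - 1)" using c_pred[of j] j1 by simp
  finally have "real K * v * Mx < (\<Sum>l<R^n. \<sigma> l \<omega>)" using sum_gt by simp
  then have "real K * v < (\<Sum>l<R^n. \<sigma> l \<omega>) / Mx" using Mx_pos by (simp add: pos_less_divide_eq)
  then show ?thesis unfolding Mx_def by (simp only: I)
qed

end

context bsetup begin

lemma main_R:
  assumes K1: "1 \<le> K" and v0: "0 < v" and v1: "v < 1" and R3: "3 \<le> R"
    and div: "\<not> summable (\<lambda>n::nat. (g (rc_inv L (exp (real n)))) ^ (K - 1))"
  shows "\<exists>Ws. Ws \<in> sets M \<and> prob Ws \<le> 1 / (2 * (real R - 1)) \<and>
    (\<forall>\<omega>\<in>space M. (\<forall>i. 0 < \<sigma> i \<omega>) \<longrightarrow> \<not> (\<exists>\<^sub>\<infinity> i. real K * v < (\<Sum>l\<le>i. \<sigma> l \<omega>) / (MAX l\<in>{..i}. \<sigma> l \<omega>)) \<longrightarrow> \<omega> \<in> Ws)"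
proof -
  interpret B: blk M \<sigma> g k K v R by unfold_locales (use K1 v0 v1 R3 in auto)
  have ns: "\<not> summable (\<lambda>n. prob (B.E n))" by (rule B.E_not_summable[OF div])
  define Ws where "Ws = (\<Union>n0. B.W n0)"
  have sets: "Ws \<in> sets M" unfolding Ws_def using B.W_sets by auto
  have inc: "incseq B.W" unfolding incseq_def B.W_def by auto
  have Wle: "prob (B.W n0) \<le> B.beta" for n0
  proof -
    have "prob (B.W n0) \<le> prob (B.W (Suc n0))" using inc B.W_sets by (intro finite_measure_mono) (auto simp: incseq_def)
    also have "\<dots> \<le> B.beta" by (rule B.W_bound[OF _ ns]) simp
    finally show ?thesis .
  qed
  have "(\<lambda>n0. prob (B.W n0)) \<longlonglongrightarrow> prob Ws"
    unfolding Ws_def by (rule finite_Lim_measure_incseq) (use B.W_sets inc in auto)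
  then have pW: "prob Ws \<le> B.beta" by (rule LIMSEQ_le_const2) (use Wle in auto)
  have cover: "\<omega> \<in> Ws" if w: "\<omega> \<in> space M" "\<forall>i. 0 < \<sigma> i \<omega>"
    and nf: "\<not> (\<exists>\<^sub>\<infinity> i. real K * v < (\<Sum>l\<le>i. \<sigma> l \<omega>) / (MAX l\<in>{..i}. \<sigma> l \<omega>))" for \<omega>
  proof -
    from nf obtain I0 where I0: "\<And>i. I0 < i \<Longrightarrow> \<not> real K * v < (\<Sum>l\<le>i. \<sigma> l \<omega>) / (MAX l\<in>{..i}. \<sigma> l \<omega>)"
      unfolding not_INFM MOST_nat by blast
    have "\<omega> \<in> B.W (Suc I0)"
    proof -
      have "\<omega> \<notin> B.E n \<inter> B.G n" if n: "Suc I0 \<le> n" for n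
      proof
        assume "\<omega> \<in> B.E n \<inter> B.G n"
        then have s: "real K * v < (\<Sum>l\<le>R^n - 1. \<sigma> l \<omega>) / (MAX l\<in>{..R^n - 1}. \<sigma> l \<omega>)"
          using B.success w(2) n by auto
        have "n < 2^n" by (rule less_exp)
        also have "2^n \<le> R^n" using R3 by (intro power_mono) auto
        finally have "I0 < R^n - 1" using n by linarith
        then show False using I0 s by blast
      qed
      then show ?thesis unfolding B.W_def using w(1) by auto
    qed
    then show ?thesis unfolding Ws_def by blast
  qed
  show ?thesis using sets pW cover unfolding B.beta_def by blast
qed

end


theorem proposition3p11:
  fixes M :: "'a measure" and \<sigma> :: "nat \<Rightarrow> 'a \<Rightarrow> real"
    and g k :: "real \<Rightarrow> real"
  assumes P: "prob_space M"
    and rv: "\<And>i. \<sigma> i \<in> borel_measurable M"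
    and indep: "prob_space.indep_vars M (\<lambda>_. borel) \<sigma> UNIV"
    and ident: "\<And>i. distr M borel (\<sigma> i) = distr M borel (\<sigma> 0)"
    and pos: "AE x in M. 0 < \<sigma> 0 x"
    and slow: "\<And>v. 0 < v \<Longrightarrow> ((\<lambda>u. tailL M (\<sigma> 0) (u * v) / tailL M (\<sigma> 0) u) \<longlongrightarrow> 1) at_top"
    \<comment> \<open>Assumption A\<close>
    and Lcont: "continuous_on UNIV (tailL M (\<sigma> 0))"
    and g_lim: "(g \<longlongrightarrow> 0) at_top"
    and g_dec: "\<exists>u0. \<forall>x y. u0 \<le> x \<longrightarrow> x \<le> y \<longrightarrow> g y \<le> g x"
    and k_lim: "\<And>v. 0 < v \<Longrightarrow>
       ((\<lambda>u. (tailL M (\<sigma> 0) (u * v) / tailL M (\<sigma> 0) u - 1) / g u) \<longlongrightarrow> k v) at_top"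
    and k_nontriv: "\<exists>v>0. k v \<noteq> 0 \<and> (\<forall>u>0. k (u * v) \<noteq> k u)"
    \<comment> \<open>N finite, and divergence of sum d(e^n)^(N-2)\<close>
    and N_fin: "\<exists>l\<ge>2. summable (\<lambda>n::nat. (g (rc_inv (tailL M (\<sigma> 0)) (exp (real n))) * ln (real n)) ^ (l - 1))"
    and diverg: "\<not> summable (\<lambda>n::nat. (g (rc_inv (tailL M (\<sigma> 0)) (exp (real n)))) ^ (Nidx (\<lambda>y. g (rc_inv (tailL M (\<sigma> 0)) y)) - 2))"
  shows "\<exists>\<epsilon>0>0. \<forall>\<epsilon>. 0 < \<epsilon> \<and> \<epsilon> < \<epsilon>0 \<longrightarrow>
           (AE x in M. \<exists>\<^sub>\<infinity> i. (\<Sum>j\<le>i. \<sigma> j x) / (MAX j\<in>{..i}. \<sigma> j x)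
               > real (Nidx (\<lambda>y. g (rc_inv (tailL M (\<sigma> 0)) y))) - 1 - \<epsilon>)"
proof -
  interpret bsetup M \<sigma> g k
    by (rule bsetup.intro[OF P rv indep ident pos slow Lcont g_lim g_dec k_lim k_nontriv])
  define NN where "NN = Nidx (\<lambda>y. g (rc_inv L y))"
  have NN2: "2 \<le> NN"
  proof -
    have "\<exists>l. 2 \<le> l \<and> summable (\<lambda>n::nat. (g (rc_inv L (exp (real n))) * ln (real n)) ^ (l - 1))"
      using N_fin by blast
    then have "2 \<le> (LEAST l. 2 \<le> l \<and> summable (\<lambda>n::nat. (g (rc_inv L (exp (real n))) * ln (real n)) ^ (l - 1)))"
      by (rule LeastI2_ex) simp
    then show ?thesis by (simp add: NN_def Nidx_def)
  qed
  define K where "K = NN - 1"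
  have K1: "1 \<le> K" using NN2 by (simp add: K_def)
  have divK: "\<not> summable (\<lambda>n::nat. (g (rc_inv L (exp (real n)))) ^ (K - 1))"
  proof -
    have e: "K - 1 = NN - 2" using NN2 by (simp add: K_def)
    show ?thesis unfolding e NN_def using diverg .
  qed
  have AEpos: "AE \<omega> in M. \<forall>i. 0 < \<sigma> i \<omega>"
  proof (subst AE_all_countable, intro allI)
    fix i
    have s: "\<sigma> i -` {..0} \<inter> space M \<in> sets M" using rv[of i] by measurable
    have "prob (\<sigma> i -` {..0} \<inter> space M) = 0" using prob_le[of i 0] F_nonpos[of 0] by simp
    then have a1: "AE \<omega> in M. \<omega> \<notin> \<sigma> i -` {..0} \<inter> space M" using prob_eq_0[OF s] by simp
    show "AE \<omega> in M. 0 < \<sigma> i \<omega>" using a1 AE_space by eventually_elim auto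
  qed
  define Pos where "Pos = {\<omega>\<in>space M. \<forall>i. 0 < \<sigma> i \<omega>}"
  have Pos_sets: "space M - Pos \<in> sets M" unfolding Pos_def using rv by measurable
  have Pos0: "prob (space M - Pos) = 0"
  proof -
    have "AE \<omega> in M. \<omega> \<notin> space M - Pos" using AEpos by eventually_elim (auto simp: Pos_def)
    then show ?thesis using prob_eq_0[OF Pos_sets] by simp
  qed
  show ?thesis
  proof (intro exI[of _ 1] conjI allI impI)
    fix \<epsilon> :: real assume \<epsilon>: "0 < \<epsilon> \<and> \<epsilon> < 1"
    define v where "v = 1 - \<epsilon> / real K"
    have v0: "0 < v" and v1: "v < 1" using \<epsilon> K1 by (auto simp: v_def field_simps)
    have Kv: "real K * v = real NN - 1 - \<epsilon>" using K1 NN2 by (simp add: v_def K_def of_nat_diff field_simps)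
    have "\<forall>R\<in>{3..}. \<exists>Ws. Ws \<in> sets M \<and> prob Ws \<le> 1 / (2 * (real R - 1)) \<and>
      (\<forall>\<omega>\<in>space M. (\<forall>i. 0 < \<sigma> i \<omega>) \<longrightarrow> \<not> (\<exists>\<^sub>\<infinity> i. real K * v < (\<Sum>l\<le>i. \<sigma> l \<omega>) / (MAX l\<in>{..i}. \<sigma> l \<omega>)) \<longrightarrow> \<omega> \<in> Ws)"
      by (intro ballI main_R[OF K1 v0 v1 _ divK]) simp
    then obtain WS where WS0: "\<forall>R\<in>{3..}. WS R \<in> sets M \<and> prob (WS R) \<le> 1 / (2 * (real R - 1)) \<and>
      (\<forall>\<omega>\<in>space M. (\<forall>i. 0 < \<sigma> i \<omega>) \<longrightarrow> \<not> (\<exists>\<^sub>\<infinity> i. real K * v < (\<Sum>l\<le>i. \<sigma> l \<omega>) / (MAX l\<in>{..i}. \<sigma> l \<omega>)) \<longrightarrow> \<omega> \<in> WS R)"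
      by (rule bchoice[THEN exE])
    note WS = bspec[OF WS0]
    define Nn where "Nn = (space M - Pos) \<union> (\<Inter>R\<in>{3..}. WS R)"
    have I_sets: "(\<Inter>R\<in>{3..}. WS R) \<in> sets M"
      by (rule sets.countable_INT') (use WS in auto)
    have Nn_sets: "Nn \<in> sets M" unfolding Nn_def using I_sets Pos_sets by (rule_tac sets.Un) auto
    have I0: "prob (\<Inter>R\<in>{3..}. WS R) \<le> 0"
    proof (rule field_le_epsilon)
      fix \<eta> :: real assume \<eta>: "0 < \<eta>"
      define R where "R = nat \<lceil>1 / \<eta>\<rceil> + 3"
      have R3: "R \<in> {3..}" by (simp add: R_def)
      have "prob (\<Inter>R\<in>{3..}. WS R) \<le> prob (WS R)" using WS[OF R3] by (intro finite_measure_mono) (use R3 in auto)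
      also have "\<dots> \<le> 1 / (2 * (real R - 1))" using WS[OF R3] by simp
      also have "\<dots> \<le> \<eta>"
      proof -
        have "1 / \<eta> \<le> real (nat \<lceil>1 / \<eta>\<rceil>)" by (rule real_nat_ceiling_ge)
        then have "1 / \<eta> \<le> 2 * (real R - 1)" by (simp add: R_def)
        then show ?thesis using \<eta> by (simp add: divide_le_eq field_simps)
      qed
      finally show "prob (\<Inter>R\<in>{3..}. WS R) \<le> 0 + \<eta>" by simp
    qed
    have "prob Nn \<le> prob (space M - Pos) + prob (\<Inter>R\<in>{3..}. WS R)"
      unfolding Nn_def by (rule measure_Un_le) (use Pos_sets I_sets in auto)
    moreover have "0 \<le> prob Nn" by simp
    ultimately have "prob Nn = 0" using Pos0 I0 by linarith
    then have em: "emeasure M Nn = 0" by (simp add: emeasure_eq_measure)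
    show "AE x in M. (\<exists>\<^sub>\<infinity> i. (\<Sum>j\<le>i. \<sigma> j x) / (MAX j\<in>{..i}. \<sigma> j x)
               > real (Nidx (\<lambda>y. g (rc_inv (tailL M (\<sigma> 0)) y))) - 1 - \<epsilon>)"
    proof (rule AE_I[OF _ em Nn_sets], safe)
      fix \<omega> assume w: "\<omega> \<in> space M"
        and nf: "\<not> (\<exists>\<^sub>\<infinity> i. (\<Sum>j\<le>i. \<sigma> j \<omega>) / (MAX j\<in>{..i}. \<sigma> j \<omega>)
               > real (Nidx (\<lambda>y. g (rc_inv (tailL M (\<sigma> 0)) y))) - 1 - \<epsilon>)"
      show "\<omega> \<in> Nn"
      proof (cases "\<omega> \<in> Pos")
        case False then show ?thesis using w by (simp add: Nn_def)
      next
        case True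
        have nf': "\<not> (\<exists>\<^sub>\<infinity> i. real K * v < (\<Sum>l\<le>i. \<sigma> l \<omega>) / (MAX l\<in>{..i}. \<sigma> l \<omega>))"
          using nf unfolding Kv NN_def by simp
        have "\<omega> \<in> WS R" if "R \<in> {3..}" for R using WS[OF that] w True nf' by (auto simp: Pos_def)
        then show ?thesis by (simp add: Nn_def)
      qed
    qed
  qed simp
qed


end
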